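(* Let $k\in\mathbb N$, $E\subseteq W(A)$ and $\vec s=(s_n(x))_{n=0}^\infty\in V^\infty(A)$ such that $E$ is $k$-large in $\vec s$. Then there exist $m\ge1$, a variable word $w(x)\in\langle (s_n(x))_{n=0}^{m-1}\,\|\,(A_{k+n})_{n=0}^{m-1}\rangle_v$ and $\vec t\in V^\infty(A)$ with $\vec t\le_{k+m}(s_{m+n}(x))_{n=0}^\infty$ such that, setting $F=\{w(a):a\in A_k\}$, the set $E\cap E_F$ is $(k+m)$-large in $\vec t$.
   Context: $\mathbb N=\{0,1,2,\dots\}$. Fix an increasing sequence $A_0\subseteq A_1\subseteq A_2\subseteq\cdots$ of finite nonempty alphabets and set $A=\bigcup_{n\in\mathbb N}A_n$. $W(A)$ denotes the set of all finite words over $A$, including the empty word; words are concatenated by juxtaposition. Fix a symbol $x\notin A$. A variable word over $A$ is a finite word over $A\cup\{x\}$ in which $x$ occurs at least once; $V(A)$ is the set of variable words. For $s(x)\in V(A)$ and $a\in A\cup\{x\}$, $s(a)$ is obtained by replacing every occurrence of $x$ by $a$. $V^\infty(A)$ is the set of infinite sequences of variable words. For a sequence $(s_n(x))_{n\in I}$ of variable words and a sequence $(B_n)_{n\in I}$ of finite subsets of $A$, both indexed by a set $I\subseteq\mathbb N$ that is either a finite interval or of the form $\{m,m+1,\dots\}$: the constant span $\langle (s_n(x))_{n\in I}\,\|\,(B_n)_{n\in I}\rangle_c$ is the set of all words $s_{l_0}(a_0)s_{l_1}(a_1)\cdots s_{l_j}(a_j)$ with $j\ge0$, $l_0<\dots<l_j$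 in $I$ and $a_i\in B_{l_i}$ for each $i$; the variable span $\langle (s_n(x))_{n\in I}\,\|\,(B_n)_{n\in I}\rangle_v$ is the set of all words $s_{l_0}(a_0)\cdots s_{l_j}(a_j)$ with $j\ge0$, $l_0<\dots<l_j$ in $I$, $a_i\in B_{l_i}\cup\{x\}$ for each $i$, and at least one $a_i=x$. (E.g. $(A_{k+n})_{n=p}^{q}$ denotes the sequence $B_n=A_{k+n}$, $p\le n\le q$.) Extracted $k$-subsequences: let $k\in\mathbb N$ and $\vec s=(s_n(x))_{n=0}^\infty\in V^\infty(A)$. A finite sequence $(t_n(x))_{n=0}^l$ of variable words is an extracted $k$-subsequence of $\vec s$ if there exist integers $0=m_0<m_1<\dots<m_{l+1}$ with $t_i(x)\in\langle (s_n(x))_{n=m_i}^{m_{i+1}-1}\,\|\,(A_{k+n})_{n=m_i}^{m_{i+1}-1}\rangle_v$ for all $0\le i\le l$. An infinite sequence $\vec t=(t_n(x))_{n=0}^\infty$ is an extracted $k$-subsequence of $\vec s$ if each initial segment $(t_n(x))_{n=0}^l$ is a finite extracted $k$-subsequence of $\vec s$. We write $\vec t\le_k\vec s$. A set $E\subseteq W(A)$ is $k$-large in $\vec s\in V^\infty(A)$ if $E\cap\langle\vec w\,\|\,(A_{k+n})_{n=0}^\infty\rangle_c\neq\emptyset$ for every $\vec w\in V^\infty(A)$ with $\vec w\le_k\vec s$. For $E\subseteq W(A)$ and nonempty $F\subseteq W(A)$, $E_F=\{z\in W(A): wz\in E\text{ for every }w\in F\}$. *)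

theory Defs
  imports Main
begin

text \<open>Letters have type 'a; the variable symbol x is encoded as None in 'a option,
  a letter a as Some a. The alphabet sequence is Al :: nat \<Rightarrow> 'a set, and A is
  the union of all Al n.\<close>

definition Alph :: "(nat \<Rightarrow> 'a set) \<Rightarrow> 'a set" where
  "Alph Al = (\<Union>n. Al n)"

definition words :: "(nat \<Rightarrow> 'a set) \<Rightarrow> 'a list set" where
  "words Al = lists (Alph Al)"

definition varwords :: "(nat \<Rightarrow> 'a set) \<Rightarrow> 'a option list set" where
  "varwords Al = {s. None \<in> set s \<and> (\<forall>b. Some b \<in> set s \<longrightarrow> b \<in> Alph Al)}"

definition varseqs :: "(nat \<Rightarrow> 'a set) \<Rightarrow> (nat \<Rightarrow> 'a option list) set" where
  "varseqs Al = {s. \<forall>n. s n \<in> varwords Al}"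

definition substc :: "'a option list \<Rightarrow> 'a \<Rightarrow> 'a list" where
  "substc s a = map (case_option a id) s"

definition substv :: "'a option list \<Rightarrow> 'a option \<Rightarrow> 'a option list" where
  "substv s c = map (case_option c Some) s"

definition cspan :: "(nat \<Rightarrow> 'a option list) \<Rightarrow> (nat \<Rightarrow> 'a set) \<Rightarrow> nat set \<Rightarrow> 'a list set" where
  "cspan s B I = {concat (map (\<lambda>(l, a). substc (s l) a) ps) | ps.
     ps \<noteq> [] \<and> sorted_wrt (\<lambda>p q. fst p < fst q) ps \<and>
     (\<forall>(l, a) \<in> set ps. l \<in> I \<and> a \<in> B l)}"

definition vspan :: "(nat \<Rightarrow> 'a option list) \<Rightarrow> (nat \<Rightarrow> 'a set) \<Rightarrow> nat set \<Rightarrow> 'a option list set" where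
  "vspan s B I = {concat (map (\<lambda>(l, c). substv (s l) c) ps) | ps.
     ps \<noteq> [] \<and> sorted_wrt (\<lambda>p q. fst p < fst q) ps \<and>
     (\<forall>(l, c) \<in> set ps. l \<in> I \<and> (c = None \<or> (\<exists>a \<in> B l. c = Some a))) \<and>
     (\<exists>l. (l, None) \<in> set ps)}"

definition extracted_fin ::
  "(nat \<Rightarrow> 'a set) \<Rightarrow> nat \<Rightarrow> (nat \<Rightarrow> 'a option list) \<Rightarrow> nat \<Rightarrow> (nat \<Rightarrow> 'a option list) \<Rightarrow> bool" where
  "extracted_fin Al k t l s \<longleftrightarrow>
     (\<exists>m :: nat \<Rightarrow> nat. m 0 = 0 \<and> (\<forall>i \<le> l. m i < m (Suc i)) \<and>
        (\<forall>i \<le> l. t i \<in> vspan s (\<lambda>n. Al (k + n)) {m i..<m (Suc i)}))"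

definition extracted ::
  "(nat \<Rightarrow> 'a set) \<Rightarrow> nat \<Rightarrow> (nat \<Rightarrow> 'a option list) \<Rightarrow> (nat \<Rightarrow> 'a option list) \<Rightarrow> bool" where
  "extracted Al k t s \<longleftrightarrow> (\<forall>l. extracted_fin Al k t l s)"

definition large ::
  "(nat \<Rightarrow> 'a set) \<Rightarrow> nat \<Rightarrow> 'a list set \<Rightarrow> (nat \<Rightarrow> 'a option list) \<Rightarrow> bool" where
  "large Al k E s \<longleftrightarrow>
     (\<forall>w \<in> varseqs Al. extracted Al k w s \<longrightarrow> E \<inter> cspan w (\<lambda>n. Al (k + n)) UNIV \<noteq> {})"

definition shiftset :: "(nat \<Rightarrow> 'a set) \<Rightarrow> 'a list set \<Rightarrow> 'a list set \<Rightarrow> 'a list set" where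
  "shiftset Al E F = {z \<in> words Al. \<forall>w \<in> F. w @ z \<in> E}"

end

theory Submission
  imports Defs "HOL-Library.FuncSet"
begin

definition cube :: "'a set \<Rightarrow> nat \<Rightarrow> 'a list set" where
  "cube L n = {w. length w = n \<and> set w \<subseteq> L}"

definition lines :: "'a set \<Rightarrow> nat \<Rightarrow> 'a option list set" where
  "lines L n = {l. length l = n \<and> None \<in> set l \<and> (\<forall>y. Some y \<in> set l \<longrightarrow> y \<in> L)}"

definition mono_line :: "('a list \<Rightarrow> nat) \<Rightarrow> 'a set \<Rightarrow> 'a option list \<Rightarrow> bool" where
  "mono_line \<chi> L l \<longleftrightarrow> (\<forall>a\<in>L. \<forall>a'\<in>L. \<chi> (substc l a) = \<chi> (substc l a'))"

definition hj :: "'a set \<Rightarrow> bool" where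
  "hj L \<longleftrightarrow> (\<forall>r. \<exists>N. \<forall>\<chi>::'a list \<Rightarrow> nat. (\<forall>w\<in>cube L N. \<chi> w < r) \<longrightarrow>
      (\<exists>l\<in>lines L N. mono_line \<chi> L l))"

lemma substc_append[simp]: "substc (x @ y) a = substc x a @ substc y a"
  by (simp add: substc_def)

lemma substc_Some[simp]: "substc (map Some f) a = f"
  by (induction f) (simp_all add: substc_def)

lemma substc_length[simp]: "length (substc l a) = length l"
  by (simp add: substc_def)

lemma substc_cube: "l \<in> lines L n \<Longrightarrow> a \<in> L' \<Longrightarrow> L \<subseteq> L' \<Longrightarrow> substc l a \<in> cube L' n"
  unfolding lines_def cube_def substc_def by (auto split: option.splits) blast

lemma cube_append: "u \<in> cube L m \<Longrightarrow> v \<in> cube L n \<Longrightarrow> u @ v \<in> cube L (m + n)"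
  unfolding cube_def by auto

lemma lines_app1: "l1 \<in> lines L m \<Longrightarrow> length l2 = n \<Longrightarrow> (\<forall>y. Some y \<in> set l2 \<longrightarrow> y \<in> L) \<Longrightarrow> l1 @ l2 \<in> lines L (m + n)"
  unfolding lines_def by simp

lemma lines_app2: "u \<in> cube L m \<Longrightarrow> l \<in> lines L n \<Longrightarrow> map Some u @ l \<in> lines L (m + n)"
  unfolding lines_def cube_def by fastforce

lemma lines_mono: "l \<in> lines L n \<Longrightarrow> L \<subseteq> L' \<Longrightarrow> l \<in> lines L' n"
  unfolding lines_def by blast

lemma finite_cube: "finite L \<Longrightarrow> finite (cube L n)"
  unfolding cube_def using finite_lists_length_eq[of L n] by (simp add: conj_commute)

lemma hj_single: "hj {b}"
  unfolding hj_def
proof (intro allI exI[of _ 1] impI)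
  fix r and \<chi> :: "'a list \<Rightarrow> nat"
  show "\<exists>l\<in>lines {b} 1. mono_line \<chi> {b} l"
    by (rule bexI[of _ "[None]"]) (auto simp: lines_def mono_line_def)
qed

definition focused :: "('a list \<Rightarrow> nat) \<Rightarrow> 'a set \<Rightarrow> 'a \<Rightarrow> nat \<Rightarrow> nat \<Rightarrow> bool" where
  "focused \<chi> L b n s \<longleftrightarrow> (\<exists>Ls col f. f \<in> cube (insert b L) n \<and> inj_on col {..<s} \<and>
         (\<forall>i<s. Ls i \<in> lines (insert b L) n \<and> (\<forall>a\<in>L. \<chi> (substc (Ls i) a) = col i) \<and> substc (Ls i) b = f))"

lemma hj_claim:
  fixes s :: nat
  assumes IH: "hj L" and ne: "L \<noteq> {}" and fin: "finite L"
  shows "\<exists>n. \<forall>\<chi>::'a list \<Rightarrow> nat. (\<forall>w\<in>cube (insert b L) n. \<chi> w < r) \<longrightarrow>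
      (\<exists>l\<in>lines (insert b L) n. mono_line \<chi> (insert b L) l) \<or> focused \<chi> L b n s"
proof (induction s)
  case 0
  have "focused \<chi> L b 0 0" for \<chi> unfolding focused_def
    by (rule exI[of _ "\<lambda>_. []"], rule exI[of _ id], rule exI[of _ "[]"]) (simp add: cube_def)
  thus ?case by (intro exI[of _ 0]) blast
next
  case (Suc s)
  define L' where "L' = insert b L"
  have LL': "L \<subseteq> L'" by (auto simp: L'_def)
  obtain a0 where a0: "a0 \<in> L" using ne by auto
  from Suc obtain n where hn: "\<And>\<chi>::'a list \<Rightarrow> nat. (\<forall>w\<in>cube L' n. \<chi> w < r) \<Longrightarrow>
      (\<exists>l\<in>lines L' n. mono_line \<chi> L' l) \<or> focused \<chi> L b n s"
    unfolding L'_def by auto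
  define C where "C = cube L' n"
  define FS where "FS = PiE C (\<lambda>_. {..<r})"
  have "finite C" unfolding C_def L'_def using fin by (simp add: finite_cube)
  hence "finite FS" unfolding FS_def by (simp add: finite_PiE)
  then obtain enc :: "('a list \<Rightarrow> nat) \<Rightarrow> nat" and R where encR: "enc ` FS = {i. i < R}" and encI: "inj_on enc FS"
    using finite_imp_inj_to_nat_seg by blast
  from IH obtain m where hm: "\<And>\<chi>::'a list \<Rightarrow> nat. (\<forall>w\<in>cube L m. \<chi> w < R) \<Longrightarrow>
      (\<exists>l\<in>lines L m. mono_line \<chi> L l)"
    unfolding hj_def by blast
  show ?case
  proof (rule exI[of _ "m + n"], intro allI impI)
    fix \<chi> :: "'a list \<Rightarrow> nat"
    assume bnd: "\<forall>w\<in>cube (insert b L) (m + n). \<chi> w < r"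
    define cs where "cs u = enc (restrict (\<lambda>v. \<chi> (u @ v)) C)" for u
    have inF: "restrict (\<lambda>v. \<chi> (u @ v)) C \<in> FS" if "u \<in> cube L' m" for u
      using that bnd cube_append unfolding FS_def C_def L'_def by fastforce
    have "\<forall>w\<in>cube L m. cs w < R"
    proof
      fix w assume "w \<in> cube L m"
      hence "w \<in> cube L' m" using LL' unfolding cube_def by auto
      thus "cs w < R" using inF encR unfolding cs_def by blast
    qed
    from hm[OF this] obtain lam where lam: "lam \<in> lines L m" and lm: "mono_line cs L lam" by blast
    have same: "\<chi> (substc lam a @ v) = \<chi> (substc lam a0 @ v)" if "a \<in> L" "v \<in> C" for a v
    proof -
      have i1: "substc lam a \<in> cube L' m" "substc lam a0 \<in> cube L' m"
        using substc_cube[OF lam _ LL'] that a0 LL' by blast+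
      have "cs (substc lam a) = cs (substc lam a0)" using lm that a0 unfolding mono_line_def by blast
      hence "restrict (\<lambda>v. \<chi> (substc lam a @ v)) C = restrict (\<lambda>v. \<chi> (substc lam a0 @ v)) C"
        using encI inF[OF i1(1)] inF[OF i1(2)] unfolding cs_def by (meson inj_onD)
      thus ?thesis using that(2) by (metis restrict_apply')
    qed
    define \<chi>' where "\<chi>' v = \<chi> (substc lam a0 @ v)" for v
    have a0': "a0 \<in> L'" using a0 LL' by blast
    have lam0: "substc lam a0 \<in> cube L' m" by (rule substc_cube[OF lam a0' LL'])
    have b1: "\<forall>w\<in>cube L' n. \<chi>' w < r"
    proof
      fix w assume "w \<in> cube L' n"
      hence "substc lam a0 @ w \<in> cube L' (m + n)" by (rule cube_append[OF lam0])
      thus "\<chi>' w < r" using bnd unfolding \<chi>'_def L'_def by blast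
    qed
    have ext: "(\<exists>l\<in>lines L' (m+n). mono_line \<chi> L' l)" if "l \<in> lines L' n" "mono_line \<chi>' L' l" for l
    proof (rule bexI[of _ "map Some (substc lam a0) @ l"])
      show "map Some (substc lam a0) @ l \<in> lines L' (m + n)"
        using lines_app2[OF lam0 that(1)] .
      show "mono_line \<chi> L' (map Some (substc lam a0) @ l)"
        using that(2) unfolding mono_line_def \<chi>'_def substc_append substc_Some by blast
    qed
    from hn[OF b1] show "(\<exists>l\<in>lines (insert b L) (m + n). mono_line \<chi> (insert b L) l) \<or> focused \<chi> L b (m + n) (Suc s)"
    proof
      assume "\<exists>l\<in>lines L' n. mono_line \<chi>' L' l"
      thus ?thesis using ext unfolding L'_def by blast
    next
      assume "focused \<chi>' L b n s"
      then obtain Ls col f where f: "f \<in> cube L' n" and ci: "inj_on col {..<s}"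
        and Ls: "\<And>i. i < s \<Longrightarrow> Ls i \<in> lines L' n \<and> (\<forall>a\<in>L. \<chi>' (substc (Ls i) a) = col i) \<and> substc (Ls i) b = f"
        unfolding focused_def L'_def by blast
      show ?thesis
      proof (cases "\<exists>i<s. \<chi>' f = col i")
        case True
        then obtain i where i: "i < s" "\<chi>' f = col i" by blast
        have "mono_line \<chi>' L' (Ls i)"
        proof -
          have all: "\<chi>' (substc (Ls i) a) = col i" if "a \<in> L'" for a
          proof (cases "a = b")
            case True thus ?thesis using Ls[OF i(1)] i(2) by simp
          next
            case False thus ?thesis using that Ls[OF i(1)] unfolding L'_def by blast
          qed
          show ?thesis unfolding mono_line_def using all by metis
        qed
        thus ?thesis using ext Ls[OF i(1)] unfolding L'_def by blast
      next
        case False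
        define Ls' where "Ls' i = (if i < s then lam @ Ls i else lam @ map Some f)" for i
        define col' where "col' i = (if i < s then col i else \<chi>' f)" for i
        have c1: "substc lam b @ f \<in> cube (insert b L) (m + n)"
        proof -
          have "substc lam b \<in> cube L' m" by (rule substc_cube[OF lam _ LL']) (simp add: L'_def)
          from cube_append[OF this f] show ?thesis unfolding L'_def .
        qed
        have c2: "inj_on col' {..<Suc s}"
          unfolding inj_on_def
        proof (intro ballI impI)
          fix i j assume ij: "i \<in> {..<Suc s}" "j \<in> {..<Suc s}" "col' i = col' j"
          show "i = j"
          proof (cases "i < s"; cases "j < s")
            assume "i < s" "j < s" thus ?thesis using ij ci unfolding col'_def inj_on_def by simp
          next
            assume "i < s" "\<not> j < s" thus ?thesis using ij False unfolding col'_def by auto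
          next
            assume "\<not> i < s" "j < s" thus ?thesis using ij False unfolding col'_def by auto
          next
            assume "\<not> i < s" "\<not> j < s" thus ?thesis using ij by simp
          qed
        qed
        have c3: "Ls' i \<in> lines (insert b L) (m + n)" if i: "i < Suc s" for i
        proof (cases "i < s")
          case True thus ?thesis using lines_app1[OF lines_mono[OF lam LL'], of "Ls i" n] Ls[OF True]
            unfolding Ls'_def L'_def lines_def by simp
        next
          case False thus ?thesis using lines_app1[OF lines_mono[OF lam LL'], of "map Some f" n] f
            unfolding Ls'_def L'_def cube_def by auto
        qed
        have c4: "\<chi> (substc (Ls' i) a) = col' i" if i: "i < Suc s" and a: "a \<in> L" for i a
            proof (cases "i < s")
              case True
              have "substc (Ls i) a \<in> C" unfolding C_def
                by (rule substc_cube[OF conjunct1[OF Ls[OF True]] _ subset_refl]) (use a LL' in blast)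
              thus ?thesis using same[OF a] Ls[OF True] a True unfolding Ls'_def col'_def \<chi>'_def by auto
            next
              case False
              thus ?thesis using same[OF a] f unfolding Ls'_def col'_def \<chi>'_def C_def by auto
            qed
        have c5: "substc (Ls' i) b = substc lam b @ f" if i: "i < Suc s" for i
            using Ls unfolding Ls'_def by auto
        have "focused \<chi> L b (m + n) (Suc s)"
        proof -
          have "\<forall>i<Suc s. Ls' i \<in> lines (insert b L) (m + n) \<and> (\<forall>a\<in>L. \<chi> (substc (Ls' i) a) = col' i) \<and> substc (Ls' i) b = substc lam b @ f"
            using c3 c4 c5 by blast
          thus ?thesis using c1 c2 unfolding focused_def by blast
        qed
        thus ?thesis by blast
      qed
    qed
  qed
qed

lemma hj_step:
  assumes IH: "hj L" and ne: "L \<noteq> {}" and fin: "finite L"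
  shows "hj (insert b L)"
  unfolding hj_def
proof
  fix r
  from hj_claim[OF assms, where b=b and r=r and s=r] obtain n where hn: "\<And>\<chi>::'a list \<Rightarrow> nat. (\<forall>w\<in>cube (insert b L) n. \<chi> w < r) \<Longrightarrow>
      (\<exists>l\<in>lines (insert b L) n. mono_line \<chi> (insert b L) l) \<or> focused \<chi> L b n r" by blast
  show "\<exists>N. \<forall>\<chi>::'a list \<Rightarrow> nat. (\<forall>w\<in>cube (insert b L) N. \<chi> w < r) \<longrightarrow>
      (\<exists>l\<in>lines (insert b L) N. mono_line \<chi> (insert b L) l)"
  proof (rule exI[of _ n], intro allI impI)
    fix \<chi> :: "'a list \<Rightarrow> nat"
    assume bnd: "\<forall>w\<in>cube (insert b L) n. \<chi> w < r"
    from hn[OF this] show "\<exists>l\<in>lines (insert b L) n. mono_line \<chi> (insert b L) l"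
    proof
      assume "focused \<chi> L b n r"
      then obtain Ls col f where f: "f \<in> cube (insert b L) n" and ci: "inj_on col {..<r}"
        and Ls: "\<And>i. i < r \<Longrightarrow> Ls i \<in> lines (insert b L) n \<and> (\<forall>a\<in>L. \<chi> (substc (Ls i) a) = col i) \<and> substc (Ls i) b = f"
        unfolding focused_def by blast
      obtain a0 where a0: "a0 \<in> L" using ne by auto
      have "col ` {..<r} \<subseteq> {..<r}"
      proof
        fix c assume "c \<in> col ` {..<r}"
        then obtain i where i: "i < r" "c = col i" by auto
        have "substc (Ls i) a0 \<in> cube (insert b L) n"
          by (rule substc_cube[OF conjunct1[OF Ls[OF i(1)]] _ subset_refl]) (use a0 in blast)
        hence "\<chi> (substc (Ls i) a0) < r" using bnd by blast
        moreover have "\<chi> (substc (Ls i) a0) = col i" using Ls[OF i(1)] a0 by blast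
        ultimately show "c \<in> {..<r}" using i by simp
      qed
      moreover have "card (col ` {..<r}) = card {..<r}" using ci card_image by blast
      ultimately have "col ` {..<r} = {..<r}" by (simp add: card_subset_eq)
      moreover have "\<chi> f < r" using bnd f by auto
      ultimately obtain i where i: "i < r" "\<chi> f = col i" by (metis imageE lessThan_iff)
      have all: "\<chi> (substc (Ls i) a) = col i" if "a \<in> insert b L" for a
      proof (cases "a = b")
        case True thus ?thesis using Ls[OF i(1)] i(2) by simp
      next
        case False thus ?thesis using that Ls[OF i(1)] by blast
      qed
      have "mono_line \<chi> (insert b L) (Ls i)" unfolding mono_line_def using all by metis
      thus ?thesis using Ls[OF i(1)] by blast
    qed
  qed
qed

theorem hales_jewett: "finite L \<Longrightarrow> L \<noteq> {} \<Longrightarrow> hj L"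
proof (induction L rule: finite_ne_induct)
  case (singleton x) thus ?case by (rule hj_single)
next
  case (insert x F) thus ?case using hj_step[of F x] by simp
qed


definition comb :: "(nat \<Rightarrow> 'a option list) \<Rightarrow> (nat \<times> 'a option) list \<Rightarrow> 'a option list" where
  "comb s ps = concat (map (\<lambda>(l, c). substv (s l) c) ps)"

definition okv :: "(nat \<Rightarrow> 'a set) \<Rightarrow> nat set \<Rightarrow> (nat \<times> 'a option) list \<Rightarrow> bool" where
  "okv B I ps \<longleftrightarrow> sorted_wrt (\<lambda>p q. fst p < fst q) ps \<and>
     (\<forall>(l, c) \<in> set ps. l \<in> I \<and> (c = None \<or> (\<exists>a \<in> B l. c = Some a)))"

definition oc :: "'a option \<Rightarrow> 'a option \<Rightarrow> 'a option" where
  "oc c' c = (case c' of None \<Rightarrow> c | Some a \<Rightarrow> Some a)"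

lemma comb_Nil[simp]: "comb s [] = []" by (simp add: comb_def)
lemma comb_Cons[simp]: "comb s ((l, c) # ps) = substv (s l) c @ comb s ps" by (simp add: comb_def)
lemma comb_append[simp]: "comb s (ps @ qs) = comb s ps @ comb s qs" by (simp add: comb_def)

lemma vspan_comb: "vspan s B I = {comb s ps | ps. ps \<noteq> [] \<and> okv B I ps \<and> (\<exists>l. (l, None) \<in> set ps)}"
  unfolding vspan_def comb_def okv_def by blast

lemma substv_None[simp]: "substv w None = w"
proof -
  have "(case x of None \<Rightarrow> None | Some a \<Rightarrow> Some a) = x" for x :: "'a option" by (cases x) auto
  thus ?thesis unfolding substv_def by (simp add: map_idI)
qed

lemma substv_substv: "substv (substv w c') c = substv w (oc c' c)"
  unfolding substv_def oc_def by (induction w) (auto split: option.splits)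

lemma substv_Nil[simp]: "substv [] c = []" by (simp add: substv_def)

lemma substv_append[simp]: "substv (x @ y) c = substv x c @ substv y c"
  by (simp add: substv_def)

lemma substv_comb: "substv (comb s ps) c = comb s (map (\<lambda>(l, c'). (l, oc c' c)) ps)"
  by (induction ps) (auto simp: substv_substv)

lemma Some_substc: "map Some (substc w a) = substv w (Some a)"
  unfolding substc_def substv_def by (induction w) (auto split: option.splits)

lemma substc_substv: "substc (substv w c) a = substc w (case c of None \<Rightarrow> a | Some b \<Rightarrow> b)"
  unfolding substc_def substv_def by (induction w) (auto split: option.splits)

lemma substc_as_the: "substc w a = map the (substv w (Some a))"
  by (metis Some_substc list.map_comp comp_def option.sel list.map_id0 id_def map_idI)

lemma cspan_iff: "z \<in> cspan s B I \<longleftrightarrow>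
   (\<exists>ps. ps \<noteq> [] \<and> okv B I ps \<and> (\<forall>p\<in>set ps. snd p \<noteq> None) \<and> map Some z = comb s ps)"
proof
  assume "z \<in> cspan s B I"
  then obtain ps0 where z: "z = concat (map (\<lambda>(l, a). substc (s l) a) ps0)" and ne: "ps0 \<noteq> []"
    and so: "sorted_wrt (\<lambda>p q. fst p < fst q) ps0" and ok: "\<forall>(l, a) \<in> set ps0. l \<in> I \<and> a \<in> B l"
    unfolding cspan_def by blast
  define ps where "ps = map (\<lambda>(l, a). (l, Some a)) ps0"
  have "map Some z = comb s ps"
    unfolding z ps_def comb_def by (induction ps0) (auto simp: Some_substc)
  moreover have "okv B I ps" unfolding okv_def ps_def
    using so ok by (auto simp: sorted_wrt_map case_prod_beta)
  moreover have "ps \<noteq> []" using ne by (simp add: ps_def)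
  moreover have "\<forall>p\<in>set ps. snd p \<noteq> None" by (auto simp: ps_def)
  ultimately show "\<exists>ps. ps \<noteq> [] \<and> okv B I ps \<and> (\<forall>p\<in>set ps. snd p \<noteq> None) \<and> map Some z = comb s ps" by blast
next
  assume "\<exists>ps. ps \<noteq> [] \<and> okv B I ps \<and> (\<forall>p\<in>set ps. snd p \<noteq> None) \<and> map Some z = comb s ps"
  then obtain ps where ne: "ps \<noteq> []" and ok: "okv B I ps" and nn: "\<forall>p\<in>set ps. snd p \<noteq> None"
    and z: "map Some z = comb s ps" by blast
  define ps0 where "ps0 = map (\<lambda>(l, c). (l, the c)) ps"
  have "map Some (concat (map (\<lambda>(l, a). substc (s l) a) ps0)) = comb s ps"
    unfolding ps0_def comb_def using nn by (induction ps) (auto simp: Some_substc)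
  hence zz: "z = concat (map (\<lambda>(l, a). substc (s l) a) ps0)"
    using z by (metis inj_Some inj_map_eq_map)
  have so: "sorted_wrt (\<lambda>p q. fst p < fst q) ps0"
    using ok unfolding okv_def ps0_def by (auto simp: sorted_wrt_map case_prod_beta)
  have oo: "\<forall>(l, a) \<in> set ps0. l \<in> I \<and> a \<in> B l"
    using ok nn unfolding okv_def ps0_def by fastforce
  show "z \<in> cspan s B I" unfolding cspan_def using zz so oo ne ps0_def by blast
qed

definition cmp :: "(nat \<Rightarrow> (nat \<times> 'a option) list) \<Rightarrow> (nat \<times> 'a option) list \<Rightarrow> (nat \<times> 'a option) list" where
  "cmp qs ps = concat (map (\<lambda>(j, c). map (\<lambda>(l, c'). (l, oc c' c)) (qs j)) ps)"

lemma cmp_Nil[simp]: "cmp qs [] = []" by (simp add: cmp_def)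
lemma cmp_Cons[simp]: "cmp qs ((j, c) # ps) = map (\<lambda>(l, c'). (l, oc c' c)) (qs j) @ cmp qs ps"
  by (simp add: cmp_def)

lemma set_cmp: "p \<in> set (cmp qs ps) \<longleftrightarrow> (\<exists>j c l c'. (j, c) \<in> set ps \<and> (l, c') \<in> set (qs j) \<and> p = (l, oc c' c))"
proof
  assume "p \<in> set (cmp qs ps)" thus "\<exists>j c l c'. (j, c) \<in> set ps \<and> (l, c') \<in> set (qs j) \<and> p = (l, oc c' c)"
    unfolding cmp_def by auto
next
  assume "\<exists>j c l c'. (j, c) \<in> set ps \<and> (l, c') \<in> set (qs j) \<and> p = (l, oc c' c)"
  then obtain j c l c' where a: "(j, c) \<in> set ps" "(l, c') \<in> set (qs j)" "p = (l, oc c' c)" by blast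
  hence "p \<in> set (map (\<lambda>(l, c'). (l, oc c' c)) (qs j))" by force
  thus "p \<in> set (cmp qs ps)" using a(1) unfolding cmp_def by force
qed

lemma comb_compose:
  assumes "\<forall>(j, c) \<in> set ps. T j = comb s (qs j)"
  shows "comb T ps = comb s (cmp qs ps)"
  using assms by (induction ps) (auto simp: substv_comb)

lemma okv_cmp:
  assumes ok: "okv B' I ps"
    and q: "\<forall>j\<in>I. okv B (J j) (qs j)"
    and JK: "\<forall>j\<in>I. J j \<subseteq> K"
    and ord: "\<forall>j\<in>I. \<forall>j'\<in>I. j < j' \<longrightarrow> (\<forall>x\<in>J j. \<forall>y\<in>J j'. x < y)"
    and alph: "\<forall>j\<in>I. \<forall>l\<in>J j. B' j \<subseteq> B l"
  shows "okv B K (cmp qs ps)"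
  using ok
proof (induction ps)
  case Nil thus ?case by (simp add: okv_def)
next
  case (Cons p ps)
  obtain j c where p: "p = (j, c)" by (cases p)
  have okps: "okv B' I ps" using Cons.prems unfolding okv_def by auto
  have IH: "okv B K (cmp qs ps)" using Cons.IH[OF okps] .
  have jI: "j \<in> I" and cok: "c = None \<or> (\<exists>a \<in> B' j. c = Some a)" using Cons.prems unfolding okv_def p by auto
  have lt: "\<forall>q\<in>set ps. j < fst q" using Cons.prems unfolding okv_def p by auto
  have qj: "okv B (J j) (qs j)" using q jI by blast
  define hd where "hd = map (\<lambda>(l, c'). (l, oc c' c)) (qs j)"
  have s1: "sorted_wrt (\<lambda>p q. fst p < fst q) hd"
    using qj unfolding okv_def hd_def by (simp add: sorted_wrt_map case_prod_beta)
  have inJ: "fst x \<in> J j" if "x \<in> set hd" for x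
    using that qj unfolding hd_def okv_def by auto
  have inJ': "\<exists>j'\<in>I. j < j' \<and> fst y \<in> J j'" if "y \<in> set (cmp qs ps)" for y
  proof -
    from that obtain j' c' l c'' where "(j', c') \<in> set ps" "(l, c'') \<in> set (qs j')" "y = (l, oc c'' c')"
      unfolding set_cmp by blast
    moreover have "j' \<in> I" using okps calculation(1) unfolding okv_def by auto
    moreover have "okv B (J j') (qs j')" using q calculation(4) by blast
    ultimately show ?thesis using lt unfolding okv_def by fastforce
  qed
  have cross: "\<forall>x\<in>set hd. \<forall>y\<in>set (cmp qs ps). fst x < fst y"
    using inJ inJ' ord jI by fastforce
  have s2: "sorted_wrt (\<lambda>p q. fst p < fst q) (hd @ cmp qs ps)"
    using s1 IH cross unfolding okv_def by (simp add: sorted_wrt_append)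
  have el: "\<forall>(l, c') \<in> set hd. l \<in> K \<and> (c' = None \<or> (\<exists>a \<in> B l. c' = Some a))"
  proof (intro ballI, clarify)
    fix l c0 assume "(l, c0) \<in> set hd"
    then obtain c' where lc: "(l, c') \<in> set (qs j)" "c0 = oc c' c" unfolding hd_def by auto
    have lJ: "l \<in> J j" and c'ok: "c' = None \<or> (\<exists>a \<in> B l. c' = Some a)" using qj lc(1) unfolding okv_def by auto
    have "l \<in> K" using lJ JK jI by blast
    moreover have "c0 = None \<or> (\<exists>a \<in> B l. c0 = Some a)"
    proof (cases c')
      case None
      hence "c0 = c" using lc(2) by (simp add: oc_def)
      thus ?thesis using cok alph jI lJ by blast
    next
      case (Some a) thus ?thesis using c'ok lc(2) by (simp add: oc_def)
    qed
    ultimately show "l \<in> K \<and> (c0 = None \<or> (\<exists>a \<in> B l. c0 = Some a))" by blast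
  qed
  show ?case unfolding p cmp_Cons hd_def[symmetric] okv_def
    using s2 el IH unfolding okv_def by auto
qed

lemma cmp_None: "(j, None) \<in> set ps \<Longrightarrow> (l, None) \<in> set (qs j) \<Longrightarrow> (l, None) \<in> set (cmp qs ps)"
  unfolding set_cmp oc_def by fastforce

lemma cmp_noNone: assumes "\<forall>p\<in>set ps. snd p \<noteq> None" shows "\<forall>p\<in>set (cmp qs ps). snd p \<noteq> None"
proof
  fix p assume "p \<in> set (cmp qs ps)"
  then obtain j c l c' where a: "(j, c) \<in> set ps" "(l, c') \<in> set (qs j)" "p = (l, oc c' c)"
    unfolding set_cmp by blast
  have "c \<noteq> None" using assms a(1) by force
  thus "snd p \<noteq> None" using a(3) by (cases c') (auto simp: oc_def)
qed

lemma cmp_ne: "ps \<noteq> [] \<Longrightarrow> \<forall>(j, c)\<in>set ps. qs j \<noteq> [] \<Longrightarrow> cmp qs ps \<noteq> []"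
  by (cases ps) auto

lemma okv_mono_I: "okv B I ps \<Longrightarrow> I \<subseteq> I' \<Longrightarrow> okv B I' ps"
  unfolding okv_def by blast

lemma okv_mono_B: "okv B I ps \<Longrightarrow> (\<forall>l\<in>I. B l \<subseteq> B' l) \<Longrightarrow> okv B' I ps"
  unfolding okv_def by fastforce

lemma vspan_mono_I: "w \<in> vspan s B I \<Longrightarrow> I \<subseteq> I' \<Longrightarrow> w \<in> vspan s B I'"
  unfolding vspan_comb using okv_mono_I by blast

lemma vspan_mono_B: "w \<in> vspan s B I \<Longrightarrow> (\<forall>l\<in>I. B l \<subseteq> B' l) \<Longrightarrow> w \<in> vspan s B' I"
  unfolding vspan_comb using okv_mono_B by blast

lemma cspan_mono_I: "w \<in> cspan s B I \<Longrightarrow> I \<subseteq> I' \<Longrightarrow> w \<in> cspan s B I'"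
  unfolding cspan_iff using okv_mono_I by blast

lemma cspan_mono_B: "w \<in> cspan s B I \<Longrightarrow> (\<forall>l\<in>I. B l \<subseteq> B' l) \<Longrightarrow> w \<in> cspan s B' I"
  unfolding cspan_iff using okv_mono_B by blast

lemma choose_reps:
  assumes "\<forall>j\<in>I. T j \<in> vspan s B (J j)"
  shows "\<exists>qs. \<forall>j\<in>I. qs j \<noteq> [] \<and> okv B (J j) (qs j) \<and> (\<exists>l. (l, None) \<in> set (qs j)) \<and> T j = comb s (qs j)"
proof -
  have "\<forall>j\<in>I. \<exists>q. q \<noteq> [] \<and> okv B (J j) q \<and> (\<exists>l. (l, None) \<in> set q) \<and> T j = comb s q"
    using assms unfolding vspan_comb by blast
  thus ?thesis by (rule bchoice)
qed

lemma vspan_compose: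
  assumes w: "w \<in> vspan T B' I"
    and T: "\<forall>j\<in>I. T j \<in> vspan s B (J j)"
    and JK: "\<forall>j\<in>I. J j \<subseteq> K"
    and ord: "\<forall>j\<in>I. \<forall>j'\<in>I. j < j' \<longrightarrow> (\<forall>x\<in>J j. \<forall>y\<in>J j'. x < y)"
    and alph: "\<forall>j\<in>I. \<forall>l\<in>J j. B' j \<subseteq> B l"
  shows "w \<in> vspan s B K"
proof -
  obtain ps where ps: "ps \<noteq> []" "okv B' I ps" "\<exists>l. (l, None) \<in> set ps" "w = comb T ps"
    using w unfolding vspan_comb by blast
  obtain qs where qs: "\<forall>j\<in>I. qs j \<noteq> [] \<and> okv B (J j) (qs j) \<and> (\<exists>l. (l, None) \<in> set (qs j)) \<and> T j = comb s (qs j)"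
    using choose_reps[OF T] by blast
  have inI: "\<forall>(j, c)\<in>set ps. j \<in> I" using ps(2) unfolding okv_def by auto
  have eq: "w = comb s (cmp qs ps)"
    using ps(4) comb_compose[of ps T s qs] qs inI by fastforce
  have ok: "okv B K (cmp qs ps)"
    using okv_cmp[OF ps(2) _ JK ord alph] qs by blast
  have ne: "cmp qs ps \<noteq> []" using cmp_ne[OF ps(1)] qs inI by fastforce
  obtain j where j: "(j, None) \<in> set ps" using ps(3) by blast
  obtain l where l: "(l, None) \<in> set (qs j)" using qs j inI by fastforce
  have "(l, None) \<in> set (cmp qs ps)" using j l by (rule cmp_None)
  thus ?thesis unfolding vspan_comb using eq ok ne by blast
qed

lemma cspan_compose:
  assumes w: "w \<in> cspan T B' I"
    and T: "\<forall>j\<in>I. T j \<in> vspan s B (J j)"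
    and JK: "\<forall>j\<in>I. J j \<subseteq> K"
    and ord: "\<forall>j\<in>I. \<forall>j'\<in>I. j < j' \<longrightarrow> (\<forall>x\<in>J j. \<forall>y\<in>J j'. x < y)"
    and alph: "\<forall>j\<in>I. \<forall>l\<in>J j. B' j \<subseteq> B l"
  shows "w \<in> cspan s B K"
proof -
  obtain ps where ps: "ps \<noteq> []" "okv B' I ps" "\<forall>p\<in>set ps. snd p \<noteq> None" "map Some w = comb T ps"
    using w unfolding cspan_iff by blast
  obtain qs where qs: "\<forall>j\<in>I. qs j \<noteq> [] \<and> okv B (J j) (qs j) \<and> (\<exists>l. (l, None) \<in> set (qs j)) \<and> T j = comb s (qs j)"
    using choose_reps[OF T] by blast
  have inI: "\<forall>(j, c)\<in>set ps. j \<in> I" using ps(2) unfolding okv_def by auto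
  have eq: "map Some w = comb s (cmp qs ps)"
    using ps(4) comb_compose[of ps T s qs] qs inI by fastforce
  have ok: "okv B K (cmp qs ps)"
    using okv_cmp[OF ps(2) _ JK ord alph] qs by blast
  have ne: "cmp qs ps \<noteq> []" using cmp_ne[OF ps(1)] qs inI by fastforce
  show ?thesis unfolding cspan_iff using eq ok ne cmp_noNone[OF ps(3)] by blast
qed

lemma comb_shift: "comb (\<lambda>n. s (d + n)) ps = comb s (map (\<lambda>(l, c). (d + l, c)) ps)"
  by (induction ps) auto

lemma okv_shift_up: assumes "okv (\<lambda>n. B (d + n)) I ps" shows "okv B ((+) d ` I) (map (\<lambda>(l, c). (d + l, c)) ps)"
proof -
  have s: "sorted_wrt (\<lambda>p q. fst p < fst q) ps" and e: "\<forall>(l, c) \<in> set ps. l \<in> I \<and> (c = None \<or> (\<exists>a \<in> B (d + l). c = Some a))"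
    using assms unfolding okv_def by auto
  have "sorted_wrt (\<lambda>p q. fst p < fst q) (map (\<lambda>(l, c). (d + l, c)) ps)"
    unfolding sorted_wrt_map
  proof (rule sorted_wrt_mono_rel[OF _ s])
    fix x y :: "nat \<times> 'a option" assume "fst x < fst y"
    thus "fst ((\<lambda>(l, c). (d + l, c)) x) < fst ((\<lambda>(l, c). (d + l, c)) y)"
      by (simp add: case_prod_beta)
  qed
  moreover have "\<forall>(l, c) \<in> set (map (\<lambda>(l, c). (d + l, c)) ps). l \<in> (+) d ` I \<and> (c = None \<or> (\<exists>a \<in> B l. c = Some a))"
  proof (clarify)
    fix l c assume "(l, c) \<in> set (map (\<lambda>(l, c). (d + l, c)) ps)"
    then obtain l0 where "(l0, c) \<in> set ps" "l = d + l0" by auto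
    thus "l \<in> (+) d ` I \<and> (c = None \<or> (\<exists>a \<in> B l. c = Some a))" using e by auto
  qed
  ultimately show ?thesis unfolding okv_def by blast
qed

lemma vspan_shift_up: "w \<in> vspan (\<lambda>n. s (d + n)) (\<lambda>n. B (d + n)) I \<Longrightarrow> w \<in> vspan s B ((+) d ` I)"
proof -
  assume "w \<in> vspan (\<lambda>n. s (d + n)) (\<lambda>n. B (d + n)) I"
  then obtain ps where ps: "ps \<noteq> []" "okv (\<lambda>n. B (d + n)) I ps" "\<exists>l. (l, None) \<in> set ps" "w = comb (\<lambda>n. s (d + n)) ps"
    unfolding vspan_comb by blast
  obtain l where "(l, None) \<in> set ps" using ps(3) by blast
  hence "(d + l, None) \<in> set (map (\<lambda>(l, c). (d + l, c)) ps)" by force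
  moreover have "w = comb s (map (\<lambda>(l, c). (d + l, c)) ps)" using ps(4) comb_shift by metis
  moreover have "map (\<lambda>(l, c). (d + l, c)) ps \<noteq> []" using ps(1) by simp
  ultimately show ?thesis unfolding vspan_comb using okv_shift_up[OF ps(2)] by blast
qed

lemma cspan_shift_up: "w \<in> cspan (\<lambda>n. s (d + n)) (\<lambda>n. B (d + n)) I \<Longrightarrow> w \<in> cspan s B ((+) d ` I)"
proof -
  assume "w \<in> cspan (\<lambda>n. s (d + n)) (\<lambda>n. B (d + n)) I"
  then obtain ps where ps: "ps \<noteq> []" "okv (\<lambda>n. B (d + n)) I ps" "\<forall>p\<in>set ps. snd p \<noteq> None" "map Some w = comb (\<lambda>n. s (d + n)) ps"
    unfolding cspan_iff by blast
  have "\<forall>p\<in>set (map (\<lambda>(l, c). (d + l, c)) ps). snd p \<noteq> None" using ps(3) by auto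
  moreover have "map Some w = comb s (map (\<lambda>(l, c). (d + l, c)) ps)" using ps(4) comb_shift by metis
  moreover have "map (\<lambda>(l, c). (d + l, c)) ps \<noteq> []" using ps(1) by simp
  ultimately show ?thesis unfolding cspan_iff using okv_shift_up[OF ps(2)] by blast
qed

lemma okv_shift_down:
  assumes "okv B I ps" "\<forall>l\<in>I. d \<le> l"
  shows "okv (\<lambda>n. B (d + n)) ((\<lambda>x. x - d) ` I) (map (\<lambda>(l, c). (l - d, c)) ps)"
proof -
  have s: "sorted_wrt (\<lambda>p q. fst p < fst q) ps" and e: "\<forall>(l, c) \<in> set ps. l \<in> I \<and> (c = None \<or> (\<exists>a \<in> B l. c = Some a))"
    using assms(1) unfolding okv_def by auto
  have "sorted_wrt (\<lambda>p q. fst p < fst q) (map (\<lambda>(l, c). (l - d, c)) ps)"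
    unfolding sorted_wrt_map
  proof (rule sorted_wrt_mono_rel[OF _ s])
    fix x y assume "x \<in> set ps" "y \<in> set ps" "fst x < fst y"
    moreover have "d \<le> fst x" using e assms(2) calculation(1) by auto
    ultimately show "fst ((\<lambda>(l, c). (l - d, c)) x) < fst ((\<lambda>(l, c). (l - d, c)) y)"
      by (auto simp: case_prod_beta)
  qed
  moreover have "\<forall>(l, c) \<in> set (map (\<lambda>(l, c). (l - d, c)) ps). l \<in> (\<lambda>x. x - d) ` I \<and> (c = None \<or> (\<exists>a \<in> B (d + l). c = Some a))"
  proof (clarify)
    fix l c assume "(l, c) \<in> set (map (\<lambda>(l, c). (l - d, c)) ps)"
    then obtain l0 where l0: "(l0, c) \<in> set ps" "l = l0 - d" by auto
    hence "l0 \<in> I" using e by auto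
    hence "d + l = l0" using l0(2) assms(2) by auto
    thus "l \<in> (\<lambda>x. x - d) ` I \<and> (c = None \<or> (\<exists>a \<in> B (d + l). c = Some a))" using e l0 \<open>l0 \<in> I\<close> by auto
  qed
  ultimately show ?thesis unfolding okv_def by blast
qed

lemma comb_shift_down: "\<forall>(l, c)\<in>set ps. d \<le> l \<Longrightarrow> comb (\<lambda>n. s (d + n)) (map (\<lambda>(l, c). (l - d, c)) ps) = comb s ps"
  by (induction ps) auto

lemma vspan_shift_down:
  assumes "w \<in> vspan s B I" "\<forall>l\<in>I. d \<le> l"
  shows "w \<in> vspan (\<lambda>n. s (d + n)) (\<lambda>n. B (d + n)) ((\<lambda>x. x - d) ` I)"
proof -
  obtain ps where ps: "ps \<noteq> []" "okv B I ps" "\<exists>l. (l, None) \<in> set ps" "w = comb s ps"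
    using assms(1) unfolding vspan_comb by blast
  have dl: "\<forall>(l, c)\<in>set ps. d \<le> l" using ps(2) assms(2) unfolding okv_def by auto
  obtain l where "(l, None) \<in> set ps" using ps(3) by blast
  hence "(l - d, None) \<in> set (map (\<lambda>(l, c). (l - d, c)) ps)" by force
  moreover have "w = comb (\<lambda>n. s (d + n)) (map (\<lambda>(l, c). (l - d, c)) ps)" using ps(4) comb_shift_down[OF dl] by simp
  moreover have "map (\<lambda>(l, c). (l - d, c)) ps \<noteq> []" using ps(1) by simp
  ultimately show ?thesis unfolding vspan_comb using okv_shift_down[OF ps(2) assms(2)] by blast
qed


definition monoA :: "(nat \<Rightarrow> 'a set) \<Rightarrow> bool" where
  "monoA Al \<longleftrightarrow> (\<forall>i j. i \<le> j \<longrightarrow> Al i \<subseteq> Al j)"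

definition wit where
  "wit Al K t l s m \<longleftrightarrow> m 0 = 0 \<and> (\<forall>i\<le>l. m i < m (Suc i)) \<and>
      (\<forall>i\<le>l. t i \<in> vspan s (\<lambda>n. Al (K + n)) {m i..<m (Suc i)})"

lemma extracted_wit: "extracted Al K t s \<longleftrightarrow> (\<forall>l. \<exists>m. wit Al K t l s m)"
  unfolding extracted_def extracted_fin_def wit_def by blast

lemma monoAD: "monoA Al \<Longrightarrow> i \<le> j \<Longrightarrow> Al i \<subseteq> Al j"
  unfolding monoA_def by blast

lemma wit_mono:
  assumes "\<forall>i\<le>l. (m::nat\<Rightarrow>nat) i < m (Suc i)" "i < j" "j \<le> Suc l"
  shows "m i < m j"
  using assms(2,3)
proof (induction j)
  case 0 thus ?case by simp
next
  case (Suc j)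
  have "m j < m (Suc j)" using assms(1) Suc.prems by auto
  thus ?case using Suc by (cases "i = j") auto
qed

lemma wit_mono_le:
  assumes "\<forall>i\<le>l. (m::nat\<Rightarrow>nat) i < m (Suc i)" "i \<le> j" "j \<le> Suc l"
  shows "m i \<le> m j"
  using wit_mono[OF assms(1)] assms(2,3) by (cases "i = j") (auto intro: less_imp_le)

lemma wit_ge:
  assumes "\<forall>i\<le>l. (m::nat\<Rightarrow>nat) i < m (Suc i)" "i \<le> Suc l"
  shows "m 0 + i \<le> m i"
  using assms(2)
proof (induction i)
  case 0 thus ?case by simp
next
  case (Suc i)
  have "m i < m (Suc i)" using assms(1) Suc.prems by auto
  thus ?case using Suc by auto
qed

lemma ext_refl: "extracted Al K s s"
proof -
  have v: "s i \<in> vspan s (\<lambda>n. Al (K + n)) {i..<Suc i}" for i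
  proof -
    have "okv (\<lambda>n. Al (K + n)) {i..<Suc i} [(i, None)]" unfolding okv_def by simp
    thus ?thesis unfolding vspan_comb by (intro CollectI exI[of _ "[(i, None)]"]) auto
  qed
  have "wit Al K s l s (\<lambda>i. i)" for l unfolding wit_def using v by simp
  thus ?thesis unfolding extracted_wit by blast
qed

lemma ext_trans:
  assumes mA: "monoA Al" and tu: "extracted Al K t u" and uw: "extracted Al K u w"
  shows "extracted Al K t w"
  unfolding extracted_wit
proof
  fix l
  obtain m where m: "wit Al K t l u m" using tu unfolding extracted_wit by blast
  define l' where "l' = m (Suc l) - 1"
  obtain m' where m': "wit Al K u l' w m'" using uw unfolding extracted_wit by blast
  have m0: "m 0 = 0" and minc: "\<forall>i\<le>l. m i < m (Suc i)"
    and mv: "\<forall>i\<le>l. t i \<in> vspan u (\<lambda>n. Al (K + n)) {m i..<m (Suc i)}" using m unfolding wit_def by auto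
  have m'0: "m' 0 = 0" and m'inc: "\<forall>i\<le>l'. m' i < m' (Suc i)"
    and m'v: "\<forall>i\<le>l'. u i \<in> vspan w (\<lambda>n. Al (K + n)) {m' i..<m' (Suc i)}" using m' unfolding wit_def by auto
  have ml: "m (Suc l) = Suc l'" using wit_mono[OF minc, of 0 "Suc l"] m0 unfolding l'_def by simp
  have "wit Al K t l w (\<lambda>i. m' (m i))"
    unfolding wit_def
  proof (intro conjI allI impI)
    show "m' (m 0) = 0" using m0 m'0 by simp
  next
    fix i assume i: "i \<le> l"
    have a: "m i < m (Suc i)" using minc i by blast
    have b: "m (Suc i) \<le> Suc l'" using wit_mono_le[OF minc, of "Suc i" "Suc l"] i ml by simp
    show "m' (m i) < m' (m (Suc i))" using wit_mono[OF m'inc a b] .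
  next
    fix i assume i: "i \<le> l"
    have a: "m i < m (Suc i)" using minc i by blast
    have b: "m (Suc i) \<le> Suc l'" using wit_mono_le[OF minc, of "Suc i" "Suc l"] i ml by simp
    show "t i \<in> vspan w (\<lambda>n. Al (K + n)) {m' (m i)..<m' (m (Suc i))}"
    proof (rule vspan_compose[OF mv[rule_format, OF i], where J = "\<lambda>j. {m' j..<m' (Suc j)}"])
      show "\<forall>j\<in>{m i..<m (Suc i)}. u j \<in> vspan w (\<lambda>n. Al (K + n)) {m' j..<m' (Suc j)}"
        using m'v b by auto
      show "\<forall>j\<in>{m i..<m (Suc i)}. {m' j..<m' (Suc j)} \<subseteq> {m' (m i)..<m' (m (Suc i))}"
      proof (intro ballI subsetI)
        fix j x assume j: "j \<in> {m i..<m (Suc i)}" and x: "x \<in> {m' j..<m' (Suc j)}"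
        have "m' (m i) \<le> m' j" using wit_mono_le[OF m'inc, of "m i" j] j b by auto
        moreover have "m' (Suc j) \<le> m' (m (Suc i))" using wit_mono_le[OF m'inc, of "Suc j" "m (Suc i)"] j b by auto
        ultimately show "x \<in> {m' (m i)..<m' (m (Suc i))}" using x by auto
      qed
      show "\<forall>j\<in>{m i..<m (Suc i)}. \<forall>j'\<in>{m i..<m (Suc i)}. j < j' \<longrightarrow> (\<forall>x\<in>{m' j..<m' (Suc j)}. \<forall>y\<in>{m' j'..<m' (Suc j')}. x < y)"
      proof (intro ballI impI)
        fix j j' x y assume j: "j \<in> {m i..<m (Suc i)}" and j': "j' \<in> {m i..<m (Suc i)}" and jj: "j < j'"
          and x: "x \<in> {m' j..<m' (Suc j)}" and y: "y \<in> {m' j'..<m' (Suc j')}"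
        have "m' (Suc j) \<le> m' j'" using wit_mono_le[OF m'inc, of "Suc j" j'] jj j' b by auto
        thus "x < y" using x y by auto
      qed
      show "\<forall>j\<in>{m i..<m (Suc i)}. \<forall>x\<in>{m' j..<m' (Suc j)}. Al (K + j) \<subseteq> Al (K + x)"
      proof (intro ballI)
        fix j x assume j: "j \<in> {m i..<m (Suc i)}" and x: "x \<in> {m' j..<m' (Suc j)}"
        have "m' 0 + j \<le> m' j" using wit_ge[OF m'inc, of j] j b by auto
        hence "j \<le> x" using x m'0 by auto
        thus "Al (K + j) \<subseteq> Al (K + x)" using monoAD[OF mA] by simp
      qed
    qed
  qed
  thus "\<exists>m. wit Al K t l w m" by blast
qed

lemma ext_shift:
  assumes "extracted Al (K + d) t (\<lambda>n. u (d + n))"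
  shows "extracted Al K t u"
  unfolding extracted_wit
proof
  fix l
  obtain m where m0: "m 0 = 0" and minc: "\<forall>i\<le>l. m i < m (Suc i)"
    and mv: "\<forall>i\<le>l. t i \<in> vspan (\<lambda>n. u (d + n)) (\<lambda>n. Al (K + d + n)) {m i..<m (Suc i)}"
    using assms unfolding extracted_wit wit_def by blast
  define m' where "m' i = (if i = 0 then 0 else d + m i)" for i
  have "wit Al K t l u m'"
    unfolding wit_def
  proof (intro conjI allI impI)
    show "m' 0 = 0" by (simp add: m'_def)
  next
    fix i assume i: "i \<le> l"
    show "m' i < m' (Suc i)" using minc i unfolding m'_def by auto
  next
    fix i assume i: "i \<le> l"
    have eq: "(\<lambda>n. Al (K + d + n)) = (\<lambda>n. (\<lambda>n. Al (K + n)) (d + n))" by (simp add: add.assoc)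
    have "t i \<in> vspan (\<lambda>n. u (d + n)) (\<lambda>n. (\<lambda>n. Al (K + n)) (d + n)) {m i..<m (Suc i)}"
      using mv i eq by metis
    hence "t i \<in> vspan u (\<lambda>n. Al (K + n)) ((+) d ` {m i..<m (Suc i)})" by (rule vspan_shift_up)
    moreover have "(+) d ` {m i..<m (Suc i)} \<subseteq> {m' i..<m' (Suc i)}"
      unfolding m'_def by auto
    ultimately show "t i \<in> vspan u (\<lambda>n. Al (K + n)) {m' i..<m' (Suc i)}" by (rule vspan_mono_I)
  qed
  thus "\<exists>m. wit Al K t l u m" by blast
qed

lemma cspan_bounded:
  assumes "z \<in> cspan t B UNIV"
  shows "\<exists>l. z \<in> cspan t B {..l}"
proof -
  obtain ps where ps: "ps \<noteq> []" "okv B UNIV ps" "\<forall>p\<in>set ps. snd p \<noteq> None" "map Some z = comb t ps"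
    using assms unfolding cspan_iff by blast
  define l where "l = Max (fst ` set ps)"
  have "\<forall>p\<in>set ps. fst p \<le> l" unfolding l_def by simp
  hence "okv B {..l} ps" using ps(2) unfolding okv_def by fastforce
  thus ?thesis unfolding cspan_iff using ps by blast
qed

lemma ext_cspan:
  assumes mA: "monoA Al" and tu: "extracted Al K t u"
  shows "cspan t (\<lambda>n. Al (K + n)) UNIV \<subseteq> cspan u (\<lambda>n. Al (K + n)) UNIV"
proof
  fix z assume "z \<in> cspan t (\<lambda>n. Al (K + n)) UNIV"
  then obtain l where z: "z \<in> cspan t (\<lambda>n. Al (K + n)) {..l}" using cspan_bounded by blast
  obtain m where m0: "m 0 = 0" and minc: "\<forall>i\<le>l. m i < m (Suc i)"
    and mv: "\<forall>i\<le>l. t i \<in> vspan u (\<lambda>n. Al (K + n)) {m i..<m (Suc i)}"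
    using tu unfolding extracted_wit wit_def by blast
  show "z \<in> cspan u (\<lambda>n. Al (K + n)) UNIV"
  proof (rule cspan_compose[OF z, where J = "\<lambda>j. {m j..<m (Suc j)}"])
    show "\<forall>j\<in>{..l}. t j \<in> vspan u (\<lambda>n. Al (K + n)) {m j..<m (Suc j)}" using mv by auto
    show "\<forall>j\<in>{..l}. {m j..<m (Suc j)} \<subseteq> UNIV" by auto
    show "\<forall>j\<in>{..l}. \<forall>j'\<in>{..l}. j < j' \<longrightarrow> (\<forall>x\<in>{m j..<m (Suc j)}. \<forall>y\<in>{m j'..<m (Suc j')}. x < y)"
    proof (intro ballI impI)
      fix j j' x y assume j: "j \<in> {..l}" and j': "j' \<in> {..l}" and jj: "j < j'"
        and x: "x \<in> {m j..<m (Suc j)}" and y: "y \<in> {m j'..<m (Suc j')}"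
      have "m (Suc j) \<le> m j'" using wit_mono_le[OF minc, of "Suc j" j'] jj j' by auto
      thus "x < y" using x y by auto
    qed
    show "\<forall>j\<in>{..l}. \<forall>x\<in>{m j..<m (Suc j)}. Al (K + j) \<subseteq> Al (K + x)"
    proof (intro ballI)
      fix j x assume j: "j \<in> {..l}" and x: "x \<in> {m j..<m (Suc j)}"
      have "m 0 + j \<le> m j" using wit_ge[OF minc, of j] j by auto
      hence "j \<le> x" using x m0 by auto
      thus "Al (K + j) \<subseteq> Al (K + x)" using monoAD[OF mA] by simp
    qed
  qed
qed

lemma ext_tail:
  assumes tu: "extracted Al K t u"
  shows "\<exists>d mm. mm 0 = 0 \<and> (\<forall>i<p. mm i < mm (Suc i) \<and> t i \<in> vspan u (\<lambda>n. Al (K + n)) {mm i..<mm (Suc i)})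
     \<and> mm p = d \<and> extracted Al (K + d) (\<lambda>n. t (p + n)) (\<lambda>n. u (d + n))"
proof -
  define D where "D = {x. \<exists>l m. p \<le> l \<and> wit Al K t l u m \<and> x = m p}"
  obtain m0 where "wit Al K t p u m0" using tu unfolding extracted_wit by blast
  hence "m0 p \<in> D" unfolding D_def by blast
  define d where "d = (LEAST x. x \<in> D)"
  have "d \<in> D" unfolding d_def using \<open>m0 p \<in> D\<close> by (rule LeastI)
  then obtain ls ms where ls: "p \<le> ls" and ms: "wit Al K t ls u ms" and dms: "d = ms p"
    unfolding D_def by blast
  have dle: "d \<le> m p" if "p \<le> l" "wit Al K t l u m" for l m
    unfolding d_def using that by (intro Least_le) (auto simp: D_def)
  have tail: "extracted Al (K + d) (\<lambda>n. t (p + n)) (\<lambda>n. u (d + n))"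
    unfolding extracted_wit
  proof
    fix l
    obtain m where mw: "wit Al K t (p + l) u m" using tu unfolding extracted_wit by blast
    have m0: "m 0 = 0" and minc: "\<forall>i\<le>p + l. m i < m (Suc i)"
      and mv: "\<forall>i\<le>p + l. t i \<in> vspan u (\<lambda>n. Al (K + n)) {m i..<m (Suc i)}"
      using mw unfolding wit_def by auto
    have dm: "d \<le> m p" using dle[OF _ mw] by simp
    have dmi: "d \<le> m (p + i)" if "i \<le> Suc l" for i
      using dm wit_mono_le[OF minc, of p "p + i"] that by auto
    define m' where "m' j = (if j = 0 then 0 else m (p + j) - d)" for j
    have "wit Al (K + d) (\<lambda>n. t (p + n)) l (\<lambda>n. u (d + n)) m'"
      unfolding wit_def
    proof (intro conjI allI impI)
      show "m' 0 = 0" by (simp add: m'_def)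
    next
      fix i assume i: "i \<le> l"
      have "m (p + i) < m (p + Suc i)" using minc i by auto
      thus "m' i < m' (Suc i)" using dmi[of i] dmi[of "Suc i"] i unfolding m'_def by auto
    next
      fix i assume i: "i \<le> l"
      have v: "t (p + i) \<in> vspan u (\<lambda>n. Al (K + n)) {m (p + i)..<m (Suc (p + i))}" using mv i by auto
      have ge: "\<forall>x\<in>{m (p + i)..<m (Suc (p + i))}. d \<le> x" using dmi[of i] i by auto
      have "t (p + i) \<in> vspan (\<lambda>n. u (d + n)) (\<lambda>n. Al (K + (d + n))) ((\<lambda>x. x - d) ` {m (p + i)..<m (Suc (p + i))})"
        using vspan_shift_down[OF v ge] by simp
      moreover have "(\<lambda>x. x - d) ` {m (p + i)..<m (Suc (p + i))} \<subseteq> {m' i..<m' (Suc i)}"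
        using dmi[of i] dmi[of "Suc i"] i unfolding m'_def by auto
      ultimately have "t (p + i) \<in> vspan (\<lambda>n. u (d + n)) (\<lambda>n. Al (K + (d + n))) {m' i..<m' (Suc i)}"
        by (rule vspan_mono_I)
      thus "t (p + i) \<in> vspan (\<lambda>n. u (d + n)) (\<lambda>n. Al (K + d + n)) {m' i..<m' (Suc i)}"
        by (simp add: add.assoc)
    qed
    thus "\<exists>m. wit Al (K + d) (\<lambda>n. t (p + n)) l (\<lambda>n. u (d + n)) m" by blast
  qed
  have "ms 0 = 0 \<and> (\<forall>i<p. ms i < ms (Suc i) \<and> t i \<in> vspan u (\<lambda>n. Al (K + n)) {ms i..<ms (Suc i)}) \<and> ms p = d"
    using ms ls dms unfolding wit_def by auto
  thus ?thesis using tail by blast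
qed


lemma okv_append:
  assumes "okv B I ps" "okv B I' qs" "\<forall>x\<in>I. \<forall>y\<in>I'. x < y"
  shows "okv B (I \<union> I') (ps @ qs)"
proof -
  have "\<forall>x\<in>set ps. \<forall>y\<in>set qs. fst x < fst y"
  proof (intro ballI)
    fix x y assume "x \<in> set ps" "y \<in> set qs"
    hence "fst x \<in> I" "fst y \<in> I'" using assms(1,2) unfolding okv_def by auto
    thus "fst x < fst y" using assms(3) by blast
  qed
  thus ?thesis using assms unfolding okv_def by (auto simp: sorted_wrt_append)
qed

lemma ivl_union: "a \<le> b \<Longrightarrow> b \<le> c \<Longrightarrow> {a..<b} \<union> {b..<c} = {a..<(c::nat)}"
  by auto

lemma vc_app:
  assumes "x \<in> vspan s B {a..<b}" "z \<in> cspan s B {b..<c}"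
  shows "x @ map Some z \<in> vspan s B {a..<c}"
proof -
  obtain ps where ps: "ps \<noteq> []" "okv B {a..<b} ps" "\<exists>l. (l, None) \<in> set ps" "x = comb s ps"
    using assms(1) unfolding vspan_comb by blast
  obtain qs where qs: "qs \<noteq> []" "okv B {b..<c} qs" "map Some z = comb s qs"
    using assms(2) unfolding cspan_iff by blast
  have ab: "a < b" using ps(1,2) unfolding okv_def by (cases ps) auto
  have bc: "b < c" using qs(1,2) unfolding okv_def by (cases qs) auto
  have "okv B ({a..<b} \<union> {b..<c}) (ps @ qs)" using okv_append[OF ps(2) qs(2)] by auto
  hence "okv B {a..<c} (ps @ qs)" using ab bc ivl_union[of a b c] by simp
  moreover have "x @ map Some z = comb s (ps @ qs)" using ps(4) qs(3) by simp
  moreover have "\<exists>l. (l, None) \<in> set (ps @ qs)" using ps(3) by auto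
  ultimately show ?thesis unfolding vspan_comb using ps(1) by blast
qed

lemma cv_app:
  assumes "z \<in> insert [] (cspan s B {a..<b})" "x \<in> vspan s B {b..<c}" "a \<le> b"
  shows "map Some z @ x \<in> vspan s B {a..<c}"
proof (cases "z = []")
  case True
  thus ?thesis using assms(2,3) vspan_mono_I[of x s B "{b..<c}" "{a..<c}"] by auto
next
  case False
  hence z: "z \<in> cspan s B {a..<b}" using assms(1) by auto
  obtain ps where ps: "ps \<noteq> []" "okv B {b..<c} ps" "\<exists>l. (l, None) \<in> set ps" "x = comb s ps"
    using assms(2) unfolding vspan_comb by blast
  obtain qs where qs: "qs \<noteq> []" "okv B {a..<b} qs" "map Some z = comb s qs"
    using z unfolding cspan_iff by blast
  have ab: "a < b" using qs(1,2) unfolding okv_def by (cases qs) auto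
  have bc: "b < c" using ps(1,2) unfolding okv_def by (cases ps) auto
  have "okv B ({a..<b} \<union> {b..<c}) (qs @ ps)" using okv_append[OF qs(2) ps(2)] by auto
  hence "okv B {a..<c} (qs @ ps)" using ab bc ivl_union[of a b c] by simp
  moreover have "map Some z @ x = comb s (qs @ ps)" using ps(4) qs(3) by simp
  moreover have "\<exists>l. (l, None) \<in> set (qs @ ps)" using ps(3) by auto
  ultimately show ?thesis unfolding vspan_comb using ps(1) by blast
qed

lemma cc_app:
  assumes "z1 \<in> insert [] (cspan s B {a..<b})" "z2 \<in> cspan s B {b..<c}" "a \<le> b"
  shows "z1 @ z2 \<in> cspan s B {a..<c}"
proof (cases "z1 = []")
  case True
  thus ?thesis using assms(2,3) cspan_mono_I[of z2 s B "{b..<c}" "{a..<c}"] by auto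
next
  case False
  hence z: "z1 \<in> cspan s B {a..<b}" using assms(1) by auto
  obtain ps where ps: "ps \<noteq> []" "okv B {b..<c} ps" "\<forall>p\<in>set ps. snd p \<noteq> None" "map Some z2 = comb s ps"
    using assms(2) unfolding cspan_iff by blast
  obtain qs where qs: "qs \<noteq> []" "okv B {a..<b} qs" "\<forall>p\<in>set qs. snd p \<noteq> None" "map Some z1 = comb s qs"
    using z unfolding cspan_iff by blast
  have ab: "a < b" using qs(1,2) unfolding okv_def by (cases qs) auto
  have bc: "b < c" using ps(1,2) unfolding okv_def by (cases ps) auto
  have "okv B ({a..<b} \<union> {b..<c}) (qs @ ps)" using okv_append[OF qs(2) ps(2)] by auto
  hence "okv B {a..<c} (qs @ ps)" using ab bc ivl_union[of a b c] by simp
  moreover have "map Some (z1 @ z2) = comb s (qs @ ps)" using ps(4) qs(4) by simp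
  moreover have "\<forall>p\<in>set (qs @ ps). snd p \<noteq> None" using ps(3) qs(3) by auto
  ultimately show ?thesis unfolding cspan_iff using ps(1) by blast
qed

lemma substc_vspan:
  assumes "w \<in> vspan s B I" "\<forall>l\<in>I. a \<in> B l"
  shows "substc w a \<in> cspan s B I"
proof -
  obtain ps where ps: "ps \<noteq> []" "okv B I ps" "w = comb s ps"
    using assms(1) unfolding vspan_comb by blast
  define qs where "qs = map (\<lambda>(l, c'). (l, oc c' (Some a))) ps"
  have "map Some (substc w a) = comb s qs"
    unfolding Some_substc qs_def ps(3) by (rule substv_comb)
  moreover have "okv B I qs"
  proof -
    have s1: "sorted_wrt (\<lambda>p q. fst p < fst q) qs"
      using ps(2) unfolding okv_def qs_def by (simp add: sorted_wrt_map case_prod_beta)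
    have "\<forall>(l, c) \<in> set qs. l \<in> I \<and> (c = None \<or> (\<exists>a \<in> B l. c = Some a))"
    proof clarify
      fix l c assume "(l, c) \<in> set qs"
      then obtain c' where lc: "(l, c') \<in> set ps" "c = oc c' (Some a)" unfolding qs_def by auto
      have "l \<in> I" "c' = None \<or> (\<exists>a \<in> B l. c' = Some a)" using ps(2) lc(1) unfolding okv_def by auto
      thus "l \<in> I \<and> (c = None \<or> (\<exists>a \<in> B l. c = Some a))" using lc(2) assms(2)
        by (cases c') (auto simp: oc_def)
    qed
    thus ?thesis using s1 unfolding okv_def by blast
  qed
  moreover have "\<forall>p\<in>set qs. snd p \<noteq> None" unfolding qs_def by (auto simp: oc_def split: option.splits)
  moreover have "qs \<noteq> []" using ps(1) by (simp add: qs_def)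
  ultimately show ?thesis unfolding cspan_iff by blast
qed

lemma vspan_varword:
  assumes sv: "s \<in> varseqs Al" and w: "w \<in> vspan s B I" and BA: "\<forall>l\<in>I. B l \<subseteq> Alph Al"
  shows "w \<in> varwords Al"
proof -
  obtain ps where ps: "ps \<noteq> []" "okv B I ps" "\<exists>l. (l, None) \<in> set ps" "w = comb s ps"
    using w unfolding vspan_comb by blast
  obtain l0 where l0: "(l0, None) \<in> set ps" using ps(3) by blast
  have "None \<in> set (s l0)" using sv unfolding varseqs_def varwords_def by blast
  hence "None \<in> set w" using l0 unfolding ps(4) comb_def by force
  moreover have "b \<in> Alph Al" if "Some b \<in> set w" for b
  proof -
    from that obtain l c where lc: "(l, c) \<in> set ps" "Some b \<in> set (substv (s l) c)"
      unfolding ps(4) comb_def by auto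
    have okc: "l \<in> I" "c = None \<or> (\<exists>a \<in> B l. c = Some a)" using ps(2) lc(1) unfolding okv_def by auto
    from lc(2) obtain y where y: "y \<in> set (s l)" "Some b = (case y of None \<Rightarrow> c | Some a \<Rightarrow> Some a)"
      unfolding substv_def by auto
    show ?thesis
    proof (cases y)
      case None
      hence "c = Some b" using y by simp
      thus ?thesis using okc BA by auto
    next
      case (Some a)
      hence "Some b \<in> set (s l)" using y by simp
      thus ?thesis using sv unfolding varseqs_def varwords_def by blast
    qed
  qed
  ultimately show ?thesis unfolding varwords_def by blast
qed

lemma finite_lines: "finite L \<Longrightarrow> finite (lines L N)"
proof -
  assume "finite L"
  hence "finite {xs. set xs \<subseteq> insert None (Some ` L) \<and> length xs = N}"
    by (intro finite_lists_length_eq) auto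
  moreover have "lines L N \<subseteq> {xs. set xs \<subseteq> insert None (Some ` L) \<and> length xs = N}"
  proof
    fix l assume l: "l \<in> lines L N"
    have "set l \<subseteq> insert None (Some ` L)"
    proof
      fix x assume "x \<in> set l"
      show "x \<in> insert None (Some ` L)"
    proof (cases x)
      case None thus ?thesis by simp
    next
      case (Some y)
      hence "y \<in> L" using l \<open>x \<in> set l\<close> unfolding lines_def by blast
      thus ?thesis using Some by simp
    qed
    qed
    thus "l \<in> {xs. set xs \<subseteq> insert None (Some ` L) \<and> length xs = N}" using l unfolding lines_def by auto
  qed
  ultimately show ?thesis by (rule finite_subset[rotated])
qed

lemma upto_mono:
  assumes "\<forall>j<N. (f::nat\<Rightarrow>nat) j < f (Suc j)" "i \<le> j" "j \<le> N"
  shows "f i \<le> f j"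
  using assms(2,3)
proof (induction j)
  case 0 thus ?case by simp
next
  case (Suc j)
  show ?case
  proof (cases "i = Suc j")
    case True thus ?thesis by simp
  next
    case False
    hence "f i \<le> f j" using Suc by auto
    moreover have "f j < f (Suc j)" using assms(1) Suc.prems by auto
    ultimately show ?thesis by simp
  qed
qed

lemma upto_ge:
  assumes "\<forall>j<N. (f::nat\<Rightarrow>nat) j < f (Suc j)" "i \<le> N"
  shows "f 0 + i \<le> f i"
  using assms(2)
proof (induction i)
  case 0 thus ?case by simp
next
  case (Suc i)
  have "f i < f (Suc i)" using assms(1) Suc.prems by auto
  thus ?case using Suc by auto
qed

lemma blocks_cond:
  assumes mA: "monoA Al" and inc: "\<forall>j<N. (mm::nat\<Rightarrow>nat) j < mm (Suc j)" and mm0: "mm 0 = 0"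
    and alph: "\<forall>j<N. B' j \<subseteq> Al (K + j)"
  shows "\<forall>j\<in>{0..<N}. {mm j..<mm (Suc j)} \<subseteq> {0..<mm N}"
    and "\<forall>j\<in>{0..<N}. \<forall>j'\<in>{0..<N}. j < j' \<longrightarrow> (\<forall>x\<in>{mm j..<mm (Suc j)}. \<forall>y\<in>{mm j'..<mm (Suc j')}. x < y)"
    and "\<forall>j\<in>{0..<N}. \<forall>l\<in>{mm j..<mm (Suc j)}. B' j \<subseteq> Al (K + l)"
proof -
  show "\<forall>j\<in>{0..<N}. {mm j..<mm (Suc j)} \<subseteq> {0..<mm N}"
  proof (intro ballI subsetI)
    fix j x assume j: "j \<in> {0..<N}" and x: "x \<in> {mm j..<mm (Suc j)}"
    have "mm (Suc j) \<le> mm N" using upto_mono[OF inc, of "Suc j" N] j by auto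
    thus "x \<in> {0..<mm N}" using x by auto
  qed
  show "\<forall>j\<in>{0..<N}. \<forall>j'\<in>{0..<N}. j < j' \<longrightarrow> (\<forall>x\<in>{mm j..<mm (Suc j)}. \<forall>y\<in>{mm j'..<mm (Suc j')}. x < y)"
  proof (intro ballI impI)
    fix j j' x y assume "j \<in> {0..<N}" "j' \<in> {0..<N}" "j < j'" "x \<in> {mm j..<mm (Suc j)}" "y \<in> {mm j'..<mm (Suc j')}"
    moreover have "mm (Suc j) \<le> mm j'" using upto_mono[OF inc, of "Suc j" j'] calculation by auto
    ultimately show "x < y" by auto
  qed
  show "\<forall>j\<in>{0..<N}. \<forall>l\<in>{mm j..<mm (Suc j)}. B' j \<subseteq> Al (K + l)"
  proof (intro ballI)
    fix j l assume j: "j \<in> {0..<N}" and l: "l \<in> {mm j..<mm (Suc j)}"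
    have "mm 0 + j \<le> mm j" using upto_ge[OF inc, of j] j by auto
    hence "j \<le> l" using l mm0 by auto
    hence "Al (K + j) \<subseteq> Al (K + l)" using monoAD[OF mA] by simp
    thus "B' j \<subseteq> Al (K + l)" using alph j by auto
  qed
qed

lemma blocks_vspan:
  assumes mA: "monoA Al" and inc: "\<forall>j<N. mm j < mm (Suc j)" and mm0: "mm 0 = 0"
    and T: "\<forall>j<N. T j \<in> vspan u (\<lambda>n. Al (K + n)) {mm j..<mm (Suc j)}"
    and w: "w \<in> vspan T B' {0..<N}" and alph: "\<forall>j<N. B' j \<subseteq> Al (K + j)"
  shows "w \<in> vspan u (\<lambda>n. Al (K + n)) {0..<mm N}"
proof -
  note c = blocks_cond[OF mA inc mm0 alph]
  have TT: "\<forall>j\<in>{0..<N}. T j \<in> vspan u (\<lambda>n. Al (K + n)) {mm j..<mm (Suc j)}" using T by simp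
  show ?thesis by (rule vspan_compose[OF w TT c(1) c(2) c(3)])
qed

lemma blocks_cspan:
  assumes mA: "monoA Al" and inc: "\<forall>j<N. mm j < mm (Suc j)" and mm0: "mm 0 = 0"
    and T: "\<forall>j<N. T j \<in> vspan u (\<lambda>n. Al (K + n)) {mm j..<mm (Suc j)}"
    and w: "w \<in> cspan T B' {0..<N}" and alph: "\<forall>j<N. B' j \<subseteq> Al (K + j)"
  shows "w \<in> cspan u (\<lambda>n. Al (K + n)) {0..<mm N}"
proof -
  note c = blocks_cond[OF mA inc mm0 alph]
  have TT: "\<forall>j\<in>{0..<N}. T j \<in> vspan u (\<lambda>n. Al (K + n)) {mm j..<mm (Suc j)}" using T by simp
  show ?thesis by (rule cspan_compose[OF w TT c(1) c(2) c(3)])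
qed


lemma line_vspan:
  assumes "ln \<in> lines L N"
  shows "comb T (map (\<lambda>j. (j, ln ! j)) [0..<N]) \<in> vspan T (\<lambda>j. L) {0..<N}"
proof -
  have len: "length ln = N" and nn: "None \<in> set ln" and lt: "\<forall>y. Some y \<in> set ln \<longrightarrow> y \<in> L"
    using assms unfolding lines_def by auto
  define ps where "ps = map (\<lambda>j. (j, ln ! j)) [0..<N]"
  have s: "sorted_wrt (\<lambda>p q. fst p < fst q) ps" unfolding ps_def sorted_wrt_map by simp
  have e: "\<forall>(l, c) \<in> set ps. l \<in> {0..<N} \<and> (c = None \<or> (\<exists>a \<in> L. c = Some a))"
  proof clarify
    fix l c assume "(l, c) \<in> set ps"
    hence l: "l < N" "c = ln ! l" unfolding ps_def by auto
    hence "c \<in> set ln" using len by auto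
    have "c = None \<or> (\<exists>a \<in> L. c = Some a)"
    proof (cases c)
      case None thus ?thesis by simp
    next
      case (Some y) thus ?thesis using lt \<open>c \<in> set ln\<close> by blast
    qed
    thus "l \<in> {0..<N} \<and> (c = None \<or> (\<exists>a \<in> L. c = Some a))" using l by simp
  qed
  obtain j where j: "j < N" "ln ! j = None" using nn len by (metis in_set_conv_nth)
  have "(j, None) \<in> set ps" unfolding ps_def using j by force
  moreover have "ps \<noteq> []" using j(1) unfolding ps_def by simp
  ultimately show ?thesis unfolding vspan_comb ps_def[symmetric] okv_def using s e by blast
qed

lemma substc_concat: "substc (concat xs) a = concat (map (\<lambda>x. substc x a) xs)"
  by (induction xs) (simp_all add: substc_def)

lemma substc_line:
  assumes "length ln = N"
  shows "substc (comb T (map (\<lambda>j. (j, ln ! j)) [0..<N])) a = concat (map (\<lambda>j. substc (T j) (substc ln a ! j)) [0..<N])"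
proof -
  have "substc (comb T (map (\<lambda>j. (j, ln ! j)) [0..<N])) a = concat (map (\<lambda>j. substc (substv (T j) (ln ! j)) a) [0..<N])"
    unfolding comb_def substc_concat by (simp add: comp_def)
  also have "\<dots> = concat (map (\<lambda>j. substc (T j) (substc ln a ! j)) [0..<N])"
  proof (rule arg_cong[where f = concat], rule map_cong[OF refl])
    fix j assume "j \<in> set [0..<N]"
    hence "j < length ln" using assms by simp
    hence "substc ln a ! j = (case ln ! j of None \<Rightarrow> a | Some b \<Rightarrow> b)"
      unfolding substc_def by (simp split: option.splits)
    thus "substc (substv (T j) (ln ! j)) a = substc (T j) (substc ln a ! j)"
      by (simp add: substc_substv)
  qed
  finally show ?thesis .
qed

locale ctx =
  fixes Al :: "nat \<Rightarrow> 'a set" and k :: nat and E :: "'a list set" and s :: "nat \<Rightarrow> 'a option list"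
  assumes fin: "\<And>n. finite (Al n)" and ne: "\<And>n. Al n \<noteq> {}" and mA: "monoA Al"
    and Ew: "E \<subseteq> words Al" and sv: "s \<in> varseqs Al" and lg: "large Al k E s"
    and NC: "\<And>m w t. 1 \<le> m \<Longrightarrow> w \<in> vspan s (\<lambda>n. Al (k + n)) {0..<m} \<Longrightarrow> t \<in> varseqs Al \<Longrightarrow>
       extracted Al (k + m) t (\<lambda>n. s (m + n)) \<Longrightarrow>
       \<not> large Al (k + m) (E \<inter> shiftset Al E {substc w a | a. a \<in> Al k}) t"
begin

definition Fs where "Fs w = {substc w a | a. a \<in> Al k}"

lemma shrink:
  assumes fW: "finite W" and WV: "W \<subseteq> vspan s (\<lambda>n. Al (k + n)) {0..<M}" and M1: "1 \<le> M"
    and Rv: "R \<in> varseqs Al" and Re: "extracted Al (k + M) R (\<lambda>n. s (M + n))"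
  shows "\<exists>R'. R' \<in> varseqs Al \<and> extracted Al (k + M) R' R \<and>
     (\<forall>w\<in>W. E \<inter> shiftset Al E (Fs w) \<inter> cspan R' (\<lambda>n. Al (k + M + n)) UNIV = {})"
  using fW WV
proof (induction W rule: finite_induct)
  case empty show ?case using Rv ext_refl by blast
next
  case (insert w W)
  then obtain R1 where R1: "R1 \<in> varseqs Al" "extracted Al (k + M) R1 R"
    "\<forall>w'\<in>W. E \<inter> shiftset Al E (Fs w') \<inter> cspan R1 (\<lambda>n. Al (k + M + n)) UNIV = {}" by auto
  have R1s: "extracted Al (k + M) R1 (\<lambda>n. s (M + n))" using ext_trans[OF mA R1(2) Re] .
  have wv: "w \<in> vspan s (\<lambda>n. Al (k + n)) {0..<M}" using insert.prems by auto
  have "\<not> large Al (k + M) (E \<inter> shiftset Al E (Fs w)) R1" using NC[OF M1 wv R1(1) R1s] unfolding Fs_def .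
  then obtain u where u: "u \<in> varseqs Al" "extracted Al (k + M) u R1"
    "E \<inter> shiftset Al E (Fs w) \<inter> cspan u (\<lambda>n. Al (k + M + n)) UNIV = {}"
    unfolding large_def by blast
  have sub: "cspan u (\<lambda>n. Al (k + M + n)) UNIV \<subseteq> cspan R1 (\<lambda>n. Al (k + M + n)) UNIV"
    using ext_cspan[OF mA u(2)] .
  have "\<forall>w'\<in>insert w W. E \<inter> shiftset Al E (Fs w') \<inter> cspan u (\<lambda>n. Al (k + M + n)) UNIV = {}"
    using u(3) R1(3) sub by blast
  thus ?case using u(1) ext_trans[OF mA u(2) R1(2)] by blast
qed

end


context ctx begin

abbreviation "B0 \<equiv> (\<lambda>n. Al (k + n))"

definition Inv where
  "Inv i M T Pre \<longleftrightarrow> i \<le> M \<and> T \<in> varseqs Al \<and> extracted Al (k + M) T (\<lambda>n. s (M + n)) \<and>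
     finite Pre \<and> [] \<in> Pre \<and> Pre \<subseteq> insert [] (cspan s (\<lambda>n. Al (k + n)) {0..<M})"

definition Pnext where
  "Pnext Pre v i = Pre \<union> {P @ substc v a | P a. P \<in> Pre \<and> a \<in> Al (k + i)}"

definition Good where
  "Good i M Pre v M' T' \<longleftrightarrow> M < M' \<and> v \<in> vspan s (\<lambda>n. Al (k + n)) {M..<M'} \<and>
     (\<forall>P\<in>Pre. \<forall>a\<in>Al (k + i). P @ substc v a \<notin> E) \<and> Inv (Suc i) M' T' (Pnext Pre v i)"

lemma step:
  assumes inv: "Inv i M T Pre"
  shows "\<exists>v M' T'. Good i M Pre v M' T'"
proof -
  have iM: "i \<le> M" and Tv: "T \<in> varseqs Al" and Text: "extracted Al (k + M) T (\<lambda>n. s (M + n))"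
    and fP: "finite Pre" and eP: "[] \<in> Pre" and PreS: "Pre \<subseteq> insert [] (cspan s B0 {0..<M})"
    using inv unfolding Inv_def by auto
  define Lam where "Lam = Al (k + i)"
  have hjL: "hj Lam" unfolding Lam_def by (rule hales_jewett[OF fin ne])
  have "finite (Pow Pre)" using fP by simp
  then obtain enc :: "'a list set \<Rightarrow> nat" and R where encR: "enc ` Pow Pre = {j. j < R}"
    and encI: "inj_on enc (Pow Pre)"
    using finite_imp_inj_to_nat_seg by blast
  obtain N where hN: "\<And>\<chi>::'a list \<Rightarrow> nat. (\<forall>w\<in>cube Lam N. \<chi> w < R) \<Longrightarrow> \<exists>ln\<in>lines Lam N. mono_line \<chi> Lam ln"
    using hjL unfolding hj_def by blast
  have N1: "1 \<le> N"
  proof -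
    have "enc {} \<in> {j. j < R}" using encR by blast
    hence "\<forall>w\<in>cube Lam N. (\<lambda>_. enc {}) w < R" by simp
    from hN[OF this] obtain ln where "ln \<in> lines Lam N" by blast
    hence "length ln = N" "None \<in> set ln" unfolding lines_def by auto
    thus ?thesis by (cases N) auto
  qed
  obtain d mm where mm0: "mm 0 = 0"
    and mmT: "\<forall>j<N. mm j < mm (Suc j) \<and> T j \<in> vspan (\<lambda>n. s (M + n)) (\<lambda>n. Al (k + M + n)) {mm j..<mm (Suc j)}"
    and mmN: "mm N = d" and Rext0: "extracted Al (k + M + d) (\<lambda>n. T (N + n)) (\<lambda>n. s (M + (d + n)))"
    using ext_tail[OF Text, of N] by (auto simp only:)
  define M' where "M' = M + d"
  have inc: "\<forall>j<N. mm j < mm (Suc j)" using mmT by blast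
  have mmT': "\<forall>j<N. T j \<in> vspan (\<lambda>n. s (M + n)) (\<lambda>n. Al (k + M + n)) {mm j..<mm (Suc j)}" using mmT by blast
  have dN: "N \<le> d" using upto_ge[OF inc, of N] mm0 mmN by simp
  have Rext: "extracted Al (k + M') (\<lambda>n. T (N + n)) (\<lambda>n. s (M' + n))"
    using Rext0 unfolding M'_def by (simp add: add.assoc)
  have R0v: "(\<lambda>n. T (N + n)) \<in> varseqs Al" using Tv unfolding varseqs_def by blast
  define Lw where "Lw ln = comb T (map (\<lambda>j. (j, ln ! j)) [0..<N])" for ln
  have Lw_vspan: "Lw ln \<in> vspan s B0 {M..<M'}" if lnl: "ln \<in> lines Lam N" for ln
  proof -
    have a1: "Lw ln \<in> vspan T (\<lambda>j. Lam) {0..<N}" unfolding Lw_def by (rule line_vspan[OF lnl])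
    have alph: "\<forall>j<N. Lam \<subseteq> Al (k + M + j)" unfolding Lam_def using monoAD[OF mA] iM by simp
    have "Lw ln \<in> vspan (\<lambda>n. s (M + n)) (\<lambda>n. Al (k + M + n)) {0..<mm N}"
      using blocks_vspan[OF mA inc mm0 mmT' a1 alph] .
    hence "Lw ln \<in> vspan (\<lambda>n. s (M + n)) (\<lambda>n. B0 (M + n)) {0..<d}" using mmN by (simp add: add.assoc)
    hence "Lw ln \<in> vspan s B0 ((+) M ` {0..<d})" by (rule vspan_shift_up)
    moreover have "(+) M ` {0..<d} \<subseteq> {M..<M'}" unfolding M'_def by auto
    ultimately show ?thesis by (rule vspan_mono_I)
  qed
  define W where "W = (\<lambda>(P, ln). map Some P @ Lw ln) ` (Pre \<times> lines Lam N)"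
  have fW: "finite W" unfolding W_def using fP finite_lines[OF fin[of "k + i"]] unfolding Lam_def by simp
  have WV: "W \<subseteq> vspan s B0 {0..<M'}"
  proof
    fix w assume "w \<in> W"
    then obtain P ln where P: "P \<in> Pre" and ln: "ln \<in> lines Lam N" and w: "w = map Some P @ Lw ln"
      unfolding W_def by auto
    show "w \<in> vspan s B0 {0..<M'}" unfolding w using cv_app[OF _ Lw_vspan[OF ln]] P PreS by blast
  qed
  have M'1: "1 \<le> M'" using N1 dN unfolding M'_def by simp
  obtain R1 where R1v: "R1 \<in> varseqs Al" and R1e: "extracted Al (k + M') R1 (\<lambda>n. T (N + n))"
    and R1avoid: "\<forall>w\<in>W. E \<inter> shiftset Al E (Fs w) \<inter> cspan R1 (\<lambda>n. Al (k + M' + n)) UNIV = {}"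
    using shrink[OF fW WV M'1 R0v Rext] by blast
  have R1s: "extracted Al (k + M') R1 (\<lambda>n. s (M' + n))" using ext_trans[OF mA R1e Rext] .
  have R1k: "extracted Al k R1 s" using ext_shift[of Al k M' R1 s] R1s by simp
  obtain sig where sigE: "sig \<in> E" and sigc: "sig \<in> cspan R1 B0 UNIV"
    using lg R1v R1k unfolding large_def by blast
  have sigc': "sig \<in> cspan R1 (\<lambda>n. Al (k + M' + n)) UNIV"
    using cspan_mono_B[OF sigc] monoAD[OF mA] by simp
  have sigw: "sig \<in> words Al" using Ew sigE by blast
  have avoid: "\<exists>a\<in>Al k. substc w a @ sig \<notin> E" if "w \<in> W" for w
  proof (rule ccontr)
    assume "\<not> (\<exists>a\<in>Al k. substc w a @ sig \<notin> E)"
    hence "\<forall>a\<in>Al k. substc w a @ sig \<in> E" by blast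
    hence "sig \<in> shiftset Al E (Fs w)" unfolding shiftset_def Fs_def using sigw by blast
    thus False using R1avoid that sigE sigc' by blast
  qed
  obtain l1 where sigl: "sig \<in> cspan R1 B0 {..l1}" using cspan_bounded[OF sigc] by blast
  define q where "q = Suc l1"
  have "{..l1} \<subseteq> {0..<q}" unfolding q_def by auto
  hence sigq: "sig \<in> cspan R1 B0 {0..<q}" by (rule cspan_mono_I[OF sigl])
  obtain d' mm' where mm'0: "mm' 0 = 0"
    and mm'T: "\<forall>j<q. mm' j < mm' (Suc j) \<and> R1 j \<in> vspan (\<lambda>n. s (M' + n)) (\<lambda>n. Al (k + M' + n)) {mm' j..<mm' (Suc j)}"
    and mm'q: "mm' q = d'" and Text': "extracted Al (k + M' + d') (\<lambda>n. R1 (q + n)) (\<lambda>n. s (M' + (d' + n)))"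
    using ext_tail[OF R1s, of q] by (auto simp only:)
  define M'' where "M'' = M' + d'"
  have inc': "\<forall>j<q. mm' j < mm' (Suc j)" using mm'T by blast
  have mm'T': "\<forall>j<q. R1 j \<in> vspan (\<lambda>n. s (M' + n)) (\<lambda>n. Al (k + M' + n)) {mm' j..<mm' (Suc j)}" using mm'T by blast
  have sig2: "sig \<in> cspan s B0 {M'..<M''}"
  proof -
    have alph: "\<forall>j<q. B0 j \<subseteq> Al (k + M' + j)" using monoAD[OF mA] by simp
    have "sig \<in> cspan (\<lambda>n. s (M' + n)) (\<lambda>n. Al (k + M' + n)) {0..<mm' q}"
      using blocks_cspan[OF mA inc' mm'0 mm'T' sigq alph] .
    hence "sig \<in> cspan (\<lambda>n. s (M' + n)) (\<lambda>n. B0 (M' + n)) {0..<d'}" using mm'q by (simp add: add.assoc)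
    hence "sig \<in> cspan s B0 ((+) M' ` {0..<d'})" by (rule cspan_shift_up)
    moreover have "(+) M' ` {0..<d'} \<subseteq> {M'..<M''}" unfolding M''_def by auto
    ultimately show ?thesis by (rule cspan_mono_I)
  qed
  define wd where "wd c = concat (map (\<lambda>j. substc (T j) (c ! j)) [0..<N])" for c
  define S where "S c = {P \<in> Pre. P @ wd c @ sig \<in> E}" for c
  define chi where "chi c = enc (S c)" for c
  have chiR: "\<forall>w\<in>cube Lam N. chi w < R"
  proof
    fix w assume "w \<in> cube Lam N"
    have "S w \<in> Pow Pre" unfolding S_def by auto
    hence "enc (S w) \<in> {j. j < R}" using encR by blast
    thus "chi w < R" unfolding chi_def by simp
  qed
  from hN[OF chiR] obtain ln where lnl: "ln \<in> lines Lam N" and lnm: "mono_line chi Lam ln" by blast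
  have lenl: "length ln = N" using lnl unfolding lines_def by simp
  define L where "L = Lw ln"
  have wdL: "substc L a = wd (substc ln a)" for a
    unfolding L_def Lw_def wd_def using substc_line[OF lenl] by simp
  have Seq: "S (substc ln a) = S (substc ln a')" if "a \<in> Lam" "a' \<in> Lam" for a a'
  proof -
    have "chi (substc ln a) = chi (substc ln a')" using lnm that unfolding mono_line_def by blast
    moreover have "S (substc ln a) \<in> Pow Pre" "S (substc ln a') \<in> Pow Pre" unfolding S_def by auto
    ultimately show ?thesis using encI unfolding chi_def by (meson inj_onD)
  qed
  define v where "v = L @ map Some sig"
  have Lsp: "L \<in> vspan s B0 {M..<M'}" unfolding L_def by (rule Lw_vspan[OF lnl])
  have vsp: "v \<in> vspan s B0 {M..<M''}" unfolding v_def by (rule vc_app[OF Lsp sig2])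
  have subv: "substc v a = substc L a @ sig" for a unfolding v_def by simp
  have AkL: "Al k \<subseteq> Lam" unfolding Lam_def using monoAD[OF mA] by simp
  have key: "\<forall>P\<in>Pre. \<forall>a\<in>Al (k + i). P @ substc v a \<notin> E"
  proof (intro ballI notI)
    fix P a assume P: "P \<in> Pre" and a: "a \<in> Al (k + i)" and inE: "P @ substc v a \<in> E"
    have aL: "a \<in> Lam" using a unfolding Lam_def .
    have "P \<in> S (substc ln a)" unfolding S_def using P inE wdL subv by simp
    hence all: "P @ substc L a' @ sig \<in> E" if "a' \<in> Al k" for a'
    proof -
      have "a' \<in> Lam" using that AkL by blast
      hence "P \<in> S (substc ln a')" using Seq[OF aL] \<open>P \<in> S (substc ln a)\<close> by blast
      thus ?thesis unfolding S_def using wdL by simp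
    qed
    define Om where "Om = map Some P @ L"
    have OmW: "Om \<in> W" unfolding W_def Om_def L_def
      by (rule image_eqI[of _ _ "(P, ln)"]) (use P lnl in auto)
    have "substc Om a' @ sig \<in> E" if "a' \<in> Al k" for a' unfolding Om_def using all[OF that] by simp
    thus False using avoid[OF OmW] by blast
  qed
  have MM'': "M < M''" unfolding M''_def M'_def using N1 dN by simp
  have inv': "Inv (Suc i) M'' (\<lambda>n. R1 (q + n)) (Pnext Pre v i)"
    unfolding Inv_def
  proof (intro conjI)
    show "Suc i \<le> M''" using iM MM'' by simp
    show "(\<lambda>n. R1 (q + n)) \<in> varseqs Al" using R1v unfolding varseqs_def by blast
    show "extracted Al (k + M'') (\<lambda>n. R1 (q + n)) (\<lambda>n. s (M'' + n))"
      using Text' unfolding M''_def by (simp add: add.assoc)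
    show "finite (Pnext Pre v i)"
    proof -
      have "{P @ substc v a | P a. P \<in> Pre \<and> a \<in> Al (k + i)} = (\<lambda>(P, a). P @ substc v a) ` (Pre \<times> Al (k + i))"
        by auto
      thus ?thesis unfolding Pnext_def using fP fin[of "k + i"] by simp
    qed
    show "[] \<in> Pnext Pre v i" unfolding Pnext_def using eP by simp
    show "Pnext Pre v i \<subseteq> insert [] (cspan s B0 {0..<M''})"
    proof
      fix z assume "z \<in> Pnext Pre v i"
      hence "z \<in> Pre \<or> (\<exists>P a. z = P @ substc v a \<and> P \<in> Pre \<and> a \<in> Al (k + i))"
        unfolding Pnext_def by blast
      thus "z \<in> insert [] (cspan s B0 {0..<M''})"
      proof
        assume "z \<in> Pre"
        hence "z \<in> insert [] (cspan s B0 {0..<M})" using PreS by blast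
        moreover have "{0..<M} \<subseteq> {0..<M''}" using MM'' by auto
        ultimately show ?thesis using cspan_mono_I by blast
      next
        assume "\<exists>P a. z = P @ substc v a \<and> P \<in> Pre \<and> a \<in> Al (k + i)"
        then obtain P a where z: "z = P @ substc v a" and P: "P \<in> Pre" and a: "a \<in> Al (k + i)" by blast
        have "\<forall>l\<in>{M..<M''}. a \<in> B0 l"
        proof
          fix l assume "l \<in> {M..<M''}"
          hence "k + i \<le> k + l" using iM by auto
          thus "a \<in> B0 l" using a monoAD[OF mA] by blast
        qed
        hence sv': "substc v a \<in> cspan s B0 {M..<M''}" by (rule substc_vspan[OF vsp])
        have "z \<in> cspan s B0 {0..<M''}" unfolding z using cc_app[OF _ sv'] P PreS by blast
        thus ?thesis by blast
      qed
    qed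
  qed
  have "Good i M Pre v M'' (\<lambda>n. R1 (q + n))" unfolding Good_def using MM'' vsp key inv' by blast
  thus ?thesis by blast
qed

end

context ctx begin

definition nxt :: "nat \<Rightarrow> nat \<times> (nat \<Rightarrow> 'a option list) \<times> 'a list set \<Rightarrow> 'a option list \<times> nat \<times> (nat \<Rightarrow> 'a option list)" where
  "nxt i st = (case st of (M, T, Pre) \<Rightarrow> (SOME x. case x of (v, M', T') \<Rightarrow> Good i M Pre v M' T'))"

primrec st :: "nat \<Rightarrow> nat \<times> (nat \<Rightarrow> 'a option list) \<times> 'a list set" where
  "st 0 = (0, s, {[]})"
| "st (Suc i) = (case st i of (M, T, Pre) \<Rightarrow> (case nxt i (st i) of (v, M', T') \<Rightarrow> (M', T', Pnext Pre v i)))"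

lemma nxt_good:
  assumes "Inv i M T Pre"
  shows "case nxt i (M, T, Pre) of (v, M', T') \<Rightarrow> Good i M Pre v M' T'"
proof -
  obtain v M' T' where "Good i M Pre v M' T'" using step[OF assms] by blast
  hence ex: "\<exists>x. case x of (v, M', T') \<Rightarrow> Good i M Pre v M' T'" by (intro exI[of _ "(v, M', T')"]) simp
  show ?thesis unfolding nxt_def using someI_ex[OF ex] by simp
qed

definition "Ms i = fst (st i)"
definition "Ts i = fst (snd (st i))"
definition "Ps i = snd (snd (st i))"
definition "vs i = fst (nxt i (st i))"

lemma st_eq: "st i = (Ms i, Ts i, Ps i)"
  unfolding Ms_def Ts_def Ps_def by simp

lemma inv_all: "Inv i (Ms i) (Ts i) (Ps i) \<and> Good i (Ms i) (Ps i) (vs i) (Ms (Suc i)) (Ts (Suc i)) \<and> Ps (Suc i) = Pnext (Ps i) (vs i) i"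
proof (induction i)
  case 0
  have i0: "Inv 0 0 s {[]}" unfolding Inv_def using sv ext_refl[of Al k s] by simp
  hence "Inv 0 (Ms 0) (Ts 0) (Ps 0)" unfolding Ms_def Ts_def Ps_def by simp
  moreover obtain v M' T' where nx: "nxt 0 (st 0) = (v, M', T')" by (cases "nxt 0 (st 0)") auto
  moreover have "Good 0 0 {[]} v M' T'" using nxt_good[OF i0] nx by simp
  ultimately show ?case unfolding Ms_def Ts_def Ps_def vs_def by simp
next
  case (Suc i)
  have inv: "Inv (Suc i) (Ms (Suc i)) (Ts (Suc i)) (Ps (Suc i))" using Suc.IH unfolding Good_def by simp
  obtain v M' T' where nx: "nxt (Suc i) (st (Suc i)) = (v, M', T')" by (cases "nxt (Suc i) (st (Suc i))") auto
  have g: "Good (Suc i) (Ms (Suc i)) (Ps (Suc i)) v M' T'"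
    using nxt_good[OF inv] nx unfolding st_eq by simp
  have "st (Suc (Suc i)) = (M', T', Pnext (Ps (Suc i)) v (Suc i))"
    using nx st_eq[of "Suc i"] by (simp only: st.simps) simp
  thus ?case using inv g nx unfolding Ms_def Ts_def Ps_def vs_def by simp
qed

lemma Ps_mono: "i \<le> j \<Longrightarrow> Ps i \<subseteq> Ps j"
proof -
  assume "i \<le> j"
  moreover have "\<And>n. Ps n \<subseteq> Ps (Suc n)" using inv_all unfolding Pnext_def by auto
  ultimately show ?thesis by (rule lift_Suc_mono_le[of Ps, rotated])
qed

lemma prefix_words:
  assumes "sorted_wrt (\<lambda>p q. fst p < fst q) ps" "\<forall>(l, a)\<in>set ps. a \<in> Al (k + l) \<and> l < n"
  shows "concat (map (\<lambda>(l, a). substc (vs l) a) ps) \<in> Ps n"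
  using assms
proof (induction ps arbitrary: n rule: rev_induct)
  case Nil
  thus ?case using inv_all[of n] unfolding Inv_def by simp
next
  case (snoc x xs)
  obtain l a where x: "x = (l, a)" by (cases x)
  have s: "sorted_wrt (\<lambda>p q. fst p < fst q) xs" and lt: "\<forall>y\<in>set xs. fst y < l"
    using snoc.prems(1) unfolding x by (auto simp: sorted_wrt_append)
  have "\<forall>(l', a')\<in>set xs. a' \<in> Al (k + l') \<and> l' < l" using snoc.prems(2) lt by auto
  hence IH: "concat (map (\<lambda>(l, a). substc (vs l) a) xs) \<in> Ps l" using snoc.IH[OF s] by blast
  have al: "a \<in> Al (k + l)" and ln: "l < n" using snoc.prems(2) unfolding x by auto
  have "concat (map (\<lambda>(l, a). substc (vs l) a) xs) @ substc (vs l) a \<in> Pnext (Ps l) (vs l) l"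
    unfolding Pnext_def using IH al by blast
  hence "concat (map (\<lambda>(l, a). substc (vs l) a) xs) @ substc (vs l) a \<in> Ps (Suc l)" using inv_all[of l] by simp
  moreover have "Ps (Suc l) \<subseteq> Ps n" using Ps_mono ln by simp
  ultimately show ?case unfolding x by auto
qed

lemma contradiction: False
proof -
  have G: "Good i (Ms i) (Ps i) (vs i) (Ms (Suc i)) (Ts (Suc i))" for i using inv_all by blast
  have M0: "Ms 0 = 0" unfolding Ms_def by simp
  have Minc: "Ms i < Ms (Suc i)" for i using G[of i] unfolding Good_def by blast
  have vsp: "vs i \<in> vspan s B0 {Ms i..<Ms (Suc i)}" for i using G[of i] unfolding Good_def by blast
  have ext: "extracted Al k vs s" unfolding extracted_wit wit_def using M0 Minc vsp by blast
  have BA: "\<forall>l\<in>{Ms i..<Ms (Suc i)}. B0 l \<subseteq> Alph Al" for i unfolding Alph_def by blast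
  have vv: "vs \<in> varseqs Al" unfolding varseqs_def using vspan_varword[OF sv vsp BA] by blast
  obtain z where zE: "z \<in> E" and zc: "z \<in> cspan vs B0 UNIV" using lg vv ext unfolding large_def by blast
  obtain ps where z: "z = concat (map (\<lambda>(l, a). substc (vs l) a) ps)" and ne: "ps \<noteq> []"
    and so: "sorted_wrt (\<lambda>p q. fst p < fst q) ps" and ok: "\<forall>(l, a) \<in> set ps. l \<in> UNIV \<and> a \<in> B0 l"
    using zc unfolding cspan_def by blast
  obtain xs x where psx: "ps = xs @ [x]" using ne by (metis rev_exhaust)
  obtain l a where x: "x = (l, a)" by (cases x)
  have s: "sorted_wrt (\<lambda>p q. fst p < fst q) xs" and lt: "\<forall>y\<in>set xs. fst y < l"
    using so unfolding psx x by (auto simp: sorted_wrt_append)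
  have "\<forall>(l', a')\<in>set xs. a' \<in> Al (k + l') \<and> l' < l" using ok lt unfolding psx by auto
  hence P: "concat (map (\<lambda>(l, a). substc (vs l) a) xs) \<in> Ps l" using prefix_words[OF s] by blast
  have al: "a \<in> Al (k + l)" using ok unfolding psx x by auto
  have "concat (map (\<lambda>(l, a). substc (vs l) a) xs) @ substc (vs l) a \<notin> E"
    using G[of l] P al unfolding Good_def by blast
  moreover have "z = concat (map (\<lambda>(l, a). substc (vs l) a) xs) @ substc (vs l) a"
    unfolding z psx x by simp
  ultimately show False using zE by simp
qed

end


theorem lemma3p8:
  fixes Al :: "nat \<Rightarrow> 'a set" and k :: nat and E :: "'a list set"
    and s :: "nat \<Rightarrow> 'a option list"
  assumes "\<And>n. finite (Al n)" and "\<And>n. Al n \<noteq> {}" and "\<And>n. Al n \<subseteq> Al (Suc n)"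
    and "E \<subseteq> words Al" and "s \<in> varseqs Al"
    and "large Al k E s"
  shows "\<exists>m \<ge> 1. \<exists>w \<in> vspan s (\<lambda>n. Al (k + n)) {0..<m}. \<exists>t \<in> varseqs Al.
           extracted Al (k + m) t (\<lambda>n. s (m + n)) \<and>
           large Al (k + m) (E \<inter> shiftset Al E {substc w a | a. a \<in> Al k}) t"
proof (rule ccontr)
  assume nc: "\<not> ?thesis"
  have mA: "monoA Al" unfolding monoA_def
  proof (intro allI impI)
    fix i j :: nat assume "i \<le> j"
    thus "Al i \<subseteq> Al j" by (rule lift_Suc_mono_le[of Al, OF assms(3)])
  qed
  have NC: "\<And>m w t. 1 \<le> m \<Longrightarrow> w \<in> vspan s (\<lambda>n. Al (k + n)) {0..<m} \<Longrightarrow> t \<in> varseqs Al \<Longrightarrow>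
       extracted Al (k + m) t (\<lambda>n. s (m + n)) \<Longrightarrow>
       \<not> large Al (k + m) (E \<inter> shiftset Al E {substc w a | a. a \<in> Al k}) t"
    using nc by blast
  interpret ctx Al k E s
    by (unfold_locales) (use assms mA NC in auto)
  show False by (rule contradiction)
qed

end
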